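(* Let $\Delta$ be a Cohen-Macaulay simplicial forest and $R=\mathbb{K}[x_i\mid x_i\in V(\Delta)]$ the polynomial ring over a field $\mathbb{K}$. Then for each $1\le k\le\nu(\Delta)$, \[\dim(R/I(\Delta)^{[k]})=|V(\Delta)|-\nu(\Delta)+k-1.\]
   Context: A simplicial complex $\Delta$ on a finite vertex set $V(\Delta)$ is a family of subsets closed under taking subsets; its facets are the maximal faces, $\mathcal{F}(\Delta)$ denotes the set of facets. A subcomplex of $\Delta$ means a simplicial complex $\Delta'$ with $\mathcal{F}(\Delta')\subseteq\mathcal{F}(\Delta)$. A facet $F$ is a leaf of $\Delta$ if either $F$ is the only facet of $\Delta$, or there is a facet $G\neq F$ with $F\cap H\subseteq F\cap G$ for all facets $H\neq F$. $\Delta$ is a simplicial tree if it is connected and every nonempty subcomplex has a leaf; a simplicial forest is a simplicial complex each of whose connected components is a simplicial tree. A matching of $\Delta$ is a set of pairwise disjoint facets; $\nu(\Delta)$ is the maximum size of a matching. For $S\subseteq V(\Delta)$, $\mathbf{x}_S=\prod_{x_i\in S}x_i$. The facet ideal is $I(\Delta)=\langle \mathbf{x}_F\mid F\in\mathcal{F}(\Delta)\rangle\subseteq R$. For a square-free monomial ideal $I$, $I^{[k]}$ is the ideal generated by the square-free monomials in $I^k$. A Cohen-Macaulay simplicial forest is a simplicial forest $\Delta$ such that $R/I(\Delta)$ is Cohen-Macaulay. *)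

theory Defs
  imports "HOL-Algebra.QuotRing" "HOL-Algebra.Ideal_Product"
          "HOL-Library.Poly_Mapping" "HOL-Library.Extended_Nat"
begin

text \<open>A simplicial complex is represented by its (finite) set of facets:
  finite, nonempty, pairwise incomparable vertex sets.\<close>

definition facet_set :: "'v set set \<Rightarrow> bool" where
  "facet_set Fs \<longleftrightarrow> finite Fs \<and> (\<forall>F\<in>Fs. finite F \<and> F \<noteq> {})
      \<and> (\<forall>F\<in>Fs. \<forall>G\<in>Fs. F \<subseteq> G \<longrightarrow> F = G)"

definition vertices :: "'v set set \<Rightarrow> 'v set" where
  "vertices Fs = \<Union>Fs"

definition is_leaf :: "'v set set \<Rightarrow> 'v set \<Rightarrow> bool" where
  "is_leaf Fs F \<longleftrightarrow> F \<in> Fs \<and>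
     (Fs = {F} \<or> (\<exists>G\<in>Fs. G \<noteq> F \<and> (\<forall>H\<in>Fs. H \<noteq> F \<longrightarrow> F \<inter> H \<subseteq> F \<inter> G)))"

definition cx_connected :: "'v set set \<Rightarrow> bool" where
  "cx_connected Fs \<longleftrightarrow> (\<forall>F\<in>Fs. \<forall>G\<in>Fs.
     (F, G) \<in> rtrancl {(A, B). A \<in> Fs \<and> B \<in> Fs \<and> A \<inter> B \<noteq> {}})"

text \<open>Subcomplexes are given by subsets of the facet set.\<close>

definition simplicial_tree :: "'v set set \<Rightarrow> bool" where
  "simplicial_tree Fs \<longleftrightarrow> Fs \<noteq> {} \<and> cx_connected Fs \<and>
     (\<forall>Gs. Gs \<subseteq> Fs \<and> Gs \<noteq> {} \<longrightarrow> (\<exists>F. is_leaf Gs F))"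

definition cx_component :: "'v set set \<Rightarrow> 'v set set \<Rightarrow> bool" where
  "cx_component Fs C \<longleftrightarrow> C \<noteq> {} \<and> C \<subseteq> Fs \<and> cx_connected C \<and>
     (\<forall>F\<in>Fs - C. \<forall>G\<in>C. F \<inter> G = {})"

definition simplicial_forest :: "'v set set \<Rightarrow> bool" where
  "simplicial_forest Fs \<longleftrightarrow> (\<forall>C. cx_component Fs C \<longrightarrow> simplicial_tree C)"

definition matching_number :: "'v set set \<Rightarrow> nat" where
  "matching_number Fs = Max {card M | M. M \<subseteq> Fs \<and> pairwise disjnt M}"

type_synonym ('v, 'k) mpoly = "('v \<Rightarrow>\<^sub>0 nat) \<Rightarrow>\<^sub>0 'k"

definition poly_ring :: "'v set \<Rightarrow> ('v, 'k::field) mpoly ring" where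
  "poly_ring V = \<lparr> carrier = {p. \<forall>m\<in>Poly_Mapping.keys p. Poly_Mapping.keys m \<subseteq> V},
                   monoid.mult = (*), one = 1, zero = 0, add = (+) \<rparr>"

definition var :: "'v \<Rightarrow> ('v, 'k::field) mpoly" where
  "var v = Poly_Mapping.single (Poly_Mapping.single v 1) 1"

definition xmon :: "'v set \<Rightarrow> ('v, 'k::field) mpoly" where
  "xmon S = (\<Prod>v\<in>S. var v)"

definition facet_ideal :: "('v, 'k::field) mpoly ring \<Rightarrow> 'v set set \<Rightarrow> ('v, 'k) mpoly set" where
  "facet_ideal R Fs = genideal R (xmon ` Fs)"

primrec ideal_pow :: "('a, 'b) ring_scheme \<Rightarrow> 'a set \<Rightarrow> nat \<Rightarrow> 'a set" where
  "ideal_pow R I 0 = carrier R"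
| "ideal_pow R I (Suc k) = ideal_prod R I (ideal_pow R I k)"

definition sqfree_pow :: "('v, 'k::field) mpoly ring \<Rightarrow> 'v set \<Rightarrow> ('v, 'k) mpoly set \<Rightarrow> nat
    \<Rightarrow> ('v, 'k) mpoly set" where
  "sqfree_pow R V I k = genideal R {xmon S | S. finite S \<and> S \<subseteq> V \<and> xmon S \<in> ideal_pow R I k}"

definition krull_dim :: "('a, 'b) ring_scheme \<Rightarrow> enat" where
  "krull_dim A = (SUP n \<in> {n. \<exists>P. (\<forall>i\<le>n. primeideal (P i) A) \<and> (\<forall>i<n. P i \<subset> P (Suc i))}. enat n)"

definition regular_seq :: "('a, 'b) ring_scheme \<Rightarrow> 'a set \<Rightarrow> 'a list \<Rightarrow> bool" where
  "regular_seq A J fs \<longleftrightarrow> set fs \<subseteq> J \<and> genideal A (set fs) \<noteq> carrier A \<and>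
     (\<forall>i<length fs. \<forall>a\<in>carrier A.
        fs ! i \<otimes>\<^bsub>A\<^esub> a \<in> genideal A (set (take i fs)) \<longrightarrow> a \<in> genideal A (set (take i fs)))"

definition depth :: "('a, 'b) ring_scheme \<Rightarrow> 'a set \<Rightarrow> enat" where
  "depth A J = (SUP fs \<in> {fs. regular_seq A J fs}. enat (length fs))"

definition cohen_macaulay_quot :: "('v, 'k::field) mpoly ring \<Rightarrow> 'v set \<Rightarrow> ('v, 'k) mpoly set \<Rightarrow> bool" where
  "cohen_macaulay_quot R V I \<longleftrightarrow>
     depth (R Quot I) (genideal (R Quot I) ((\<lambda>v. I +>\<^bsub>R\<^esub> var v) ` V)) = krull_dim (R Quot I)"

end

theory Submission
  imports Defs "HOL-Computational_Algebra.Polynomial"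
begin

abbreviation "kys \<equiv> Poly_Mapping.keys"
abbreviation "lkp \<equiv> Poly_Mapping.lookup"
abbreviation "sng \<equiv> Poly_Mapping.single"

lemma keys_add_nat: "kys ((a::'v \<Rightarrow>\<^sub>0 nat) + b) = kys a \<union> kys b"
  by (auto simp: in_keys_iff lookup_add)

definition supp_in :: "'v set \<Rightarrow> ('v, 'k::field) mpoly \<Rightarrow> bool" where
  "supp_in V p \<longleftrightarrow> (\<forall>m\<in>kys p. kys (m::'v \<Rightarrow>\<^sub>0 nat) \<subseteq> V)"

lemma carrier_poly_ring: "carrier (poly_ring V) = {p. supp_in V p}"
  by (simp add: poly_ring_def supp_in_def)

lemma poly_ring_simps[simp]: "carrier (poly_ring V) = {p. supp_in V p}"
  "monoid.mult (poly_ring V) = (*)" "one (poly_ring V) = 1" "zero (poly_ring V) = 0" "add (poly_ring V) = (+)"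
  by (simp_all add: poly_ring_def supp_in_def)

lemma supp_in_add: "supp_in V p \<Longrightarrow> supp_in V q \<Longrightarrow> supp_in V (p + q)"
  unfolding supp_in_def using keys_add[of p q] by (meson UnE subsetD)

lemma supp_in_mult: "supp_in V p \<Longrightarrow> supp_in V q \<Longrightarrow> supp_in V (p * q)"
proof -
  assume p: "supp_in V p" and q: "supp_in V q"
  show ?thesis unfolding supp_in_def
  proof
    fix m assume "m \<in> kys (p * q)"
    then obtain a b where "m = a + b" "a \<in> kys p" "b \<in> kys q" using keys_mult[of p q] by blast
    then show "kys m \<subseteq> V" using p q by (auto simp: supp_in_def keys_add_nat)
  qed
qed

lemma supp_in_uminus: "supp_in V p \<Longrightarrow> supp_in V (- p)"
  unfolding supp_in_def by simp

lemma supp_in_diff: "supp_in V p \<Longrightarrow> supp_in V q \<Longrightarrow> supp_in V (p - q)"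
  unfolding supp_in_def using keys_diff[of p q] by (meson UnE subsetD)

lemma supp_in_0[simp]: "supp_in V 0" and supp_in_1[simp]: "supp_in V 1"
  by (auto simp: supp_in_def)

lemma supp_in_mono: "supp_in S p \<Longrightarrow> S \<subseteq> T \<Longrightarrow> supp_in T p"
  unfolding supp_in_def by blast

lemma supp_in_sum: "(\<And>i. i \<in> I \<Longrightarrow> supp_in V (f i)) \<Longrightarrow> supp_in V (sum f I)"
  by (induct I rule: infinite_finite_induct) (auto intro: supp_in_add)

lemma supp_in_prod: "(\<And>i. i \<in> I \<Longrightarrow> supp_in V (f i)) \<Longrightarrow> supp_in V (prod f I)"
  by (induct I rule: infinite_finite_induct) (auto intro: supp_in_mult)

lemma supp_in_power: "supp_in V p \<Longrightarrow> supp_in V (p ^ n)"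
  by (induct n) (auto intro: supp_in_mult)

lemma cring_poly_ring: "cring (poly_ring V :: ('v, 'k::field) mpoly ring)"
  apply (rule cringI)
    apply (rule abelian_groupI)
         apply (simp add: supp_in_add)
        apply simp
       apply (simp add: add.assoc)
      apply (simp add: add.commute)
     apply simp
    apply (rule_tac x="- x" in bexI)
     apply simp
    apply (simp add: supp_in_uminus)
   apply (rule comm_monoidI)
       apply (simp add: supp_in_mult)
      apply simp
     apply (simp add: mult.assoc)
    apply simp
   apply (simp add: mult.commute)
  apply (simp add: distrib_right)
  done


lemma a_inv_poly_ring[simp]: "supp_in V p \<Longrightarrow> a_inv (poly_ring V) p = - (p::('v, 'k::field) mpoly)"
  apply (rule abelian_group.minus_equality)
     apply (rule cring.axioms(1)[THEN ring.is_abelian_group, OF cring_poly_ring])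
    apply (simp_all add: supp_in_uminus)
  done

lemma a_minus_poly_ring[simp]: "supp_in V p \<Longrightarrow> supp_in V q \<Longrightarrow> a_minus (poly_ring V) p q = p - q"
  by (simp add: a_minus_def)

lemma var_supp: "v \<in> V \<Longrightarrow> supp_in V (var v)"
  by (simp add: supp_in_def var_def)

lemma xmon_supp: "finite S \<Longrightarrow> S \<subseteq> V \<Longrightarrow> supp_in V (xmon S)"
  unfolding xmon_def by (rule supp_in_prod) (auto intro: var_supp)

lemma xmon_eq: "finite S \<Longrightarrow> xmon S = sng (\<Sum>v\<in>S. sng v 1) (1::'k::field)"
  unfolding xmon_def var_def
  by (induct S rule: finite_induct) (auto simp: mult_single)


section \<open>No zero divisors\<close>

definition Phi :: "'v list \<Rightarrow> ('v \<Rightarrow>\<^sub>0 nat) \<Rightarrow> (nat \<Rightarrow>\<^sub>0 nat)" where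
  "Phi us m = (\<Sum>i<length us. sng i (lkp m (us ! i)))"

lemma lookup_Phi: "lkp (Phi us m) i = (if i < length us then lkp m (us ! i) else 0)"
  by (simp add: Phi_def lookup_sum lookup_single when_def)

lemma Phi_add: "Phi us (a + b) = Phi us a + Phi us b"
  by (simp add: Phi_def lookup_add single_add sum.distrib)

lemma Phi_inj:
  assumes "kys a \<subseteq> set us" "kys b \<subseteq> set us" "Phi us a = Phi us b"
  shows "a = b"
proof (rule poly_mapping_eqI)
  fix v
  show "lkp a v = lkp b v"
  proof (cases "v \<in> set us")
    case True
    then obtain i where i: "i < length us" "us ! i = v" by (auto simp: in_set_conv_nth)
    have "lkp (Phi us a) i = lkp (Phi us b) i" using assms(3) by simp
    then show ?thesis using i by (simp add: lookup_Phi)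
  next
    case False
    then have "v \<notin> kys a" "v \<notin> kys b" using assms by auto
    then show ?thesis by (simp add: in_keys_iff)
  qed
qed

lemma exists_max_Phi:
  fixes p :: "('v, 'k::field) mpoly"
  assumes "p \<noteq> 0"
  shows "\<exists>a0\<in>kys p. \<forall>a\<in>kys p. Phi us a \<le> Phi us a0"
proof -
  have fin: "finite (Phi us ` kys p)" by simp
  have ne: "Phi us ` kys p \<noteq> {}" using assms by simp
  obtain a0 where a0: "a0 \<in> kys p" "Phi us a0 = Max (Phi us ` kys p)"
    using Max_in[OF fin ne] by auto
  show ?thesis using a0 fin by (intro bexI[of _ a0]) auto
qed

lemma mpoly_mult_nonzero:
  fixes p q :: "('v, 'k::field) mpoly"
  assumes "p \<noteq> 0" "q \<noteq> 0"
  shows "p * q \<noteq> 0"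
proof -
  define U where "U = (\<Union>m\<in>kys p \<union> kys q. kys m)"
  have "finite U" unfolding U_def by simp
  then obtain us where us: "set us = U" "distinct us" using finite_distinct_list by blast
  have kU: "\<And>m. m \<in> kys p \<Longrightarrow> kys m \<subseteq> set us" "\<And>m. m \<in> kys q \<Longrightarrow> kys m \<subseteq> set us"
    using us U_def by auto
  obtain a0 where a0: "a0 \<in> kys p" "\<forall>a\<in>kys p. Phi us a \<le> Phi us a0"
    using exists_max_Phi[OF assms(1)] by blast
  obtain b0 where b0: "b0 \<in> kys q" "\<forall>b\<in>kys q. Phi us b \<le> Phi us b0"
    using exists_max_Phi[OF assms(2)] by blast
  have alt: "Phi us a < Phi us a0" if "a \<in> kys p" "a \<noteq> a0" for a
    using a0 that Phi_inj[of a us a0] kU by (meson order_le_imp_less_or_eq)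
  have blt: "Phi us b < Phi us b0" if "b \<in> kys q" "b \<noteq> b0" for b
    using b0 that Phi_inj[of b us b0] kU by (meson order_le_imp_less_or_eq)
  define c where "c = lkp p a0"
  define d where "d = lkp q b0"
  have c0: "c \<noteq> 0" and d0: "d \<noteq> 0" using a0 b0 by (auto simp: c_def d_def in_keys_iff)
  define p' where "p' = p - sng a0 c"
  define q' where "q' = q - sng b0 d"
  have kp': "kys p' \<subseteq> kys p - {a0}"
    by (auto simp: p'_def c_def in_keys_iff lookup_minus lookup_single when_def split: if_splits)
  have kq': "kys q' \<subseteq> kys q - {b0}"
    by (auto simp: q'_def d_def in_keys_iff lookup_minus lookup_single when_def split: if_splits)
  have eq: "p * q = sng a0 c * sng b0 d + sng a0 c * q' + p' * q"
    by (simp add: p'_def q'_def algebra_simps)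
  have l1: "lkp (sng a0 c * sng b0 d) (a0 + b0) = c * d" by (simp add: mult_single)
  have l2: "lkp (sng a0 c * q') (a0 + b0) = 0"
  proof -
    have "a0 + b0 \<notin> kys (sng a0 c * q')"
    proof
      assume "a0 + b0 \<in> kys (sng a0 c * q')"
      then obtain a b where ab: "a0 + b0 = a + b" "a \<in> kys (sng a0 c)" "b \<in> kys q'"
        using keys_mult[of "sng a0 c" q'] by blast
      then have "a = a0" using c0 by simp
      then have "b = b0" using ab(1) by simp
      then show False using ab(3) kq' by auto
    qed
    then show ?thesis by (simp add: in_keys_iff)
  qed
  have l3: "lkp (p' * q) (a0 + b0) = 0"
  proof -
    have "a0 + b0 \<notin> kys (p' * q)"
    proof
      assume "a0 + b0 \<in> kys (p' * q)"
      then obtain a b where ab: "a0 + b0 = a + b" "a \<in> kys p'" "b \<in> kys q"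
        using keys_mult[of p' q] by blast
      have "Phi us a < Phi us a0" using ab(2) kp' alt by auto
      moreover have "Phi us b \<le> Phi us b0" using ab(3) b0 by auto
      ultimately have "Phi us a + Phi us b < Phi us a0 + Phi us b0"
        by (rule add_less_le_mono)
      then have "Phi us (a + b) < Phi us (a0 + b0)" by (simp add: Phi_add)
      then show False using ab(1) by simp
    qed
    then show ?thesis by (simp add: in_keys_iff)
  qed
  have "lkp (p * q) (a0 + b0) = c * d"
    unfolding eq by (simp add: lookup_add l1 l2 l3)
  then show ?thesis using c0 d0 by auto
qed

lemma ring_poly_ring: "ring (poly_ring V :: ('v, 'k::field) mpoly ring)"
  using cring_poly_ring cring.axioms(1) by blast

lemma ideal_polyI:
  fixes I :: "('v, 'k::field) mpoly set"
  assumes sub: "\<And>p. p \<in> I \<Longrightarrow> supp_in V p" and z: "0 \<in> I"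
    and ad: "\<And>a b. a \<in> I \<Longrightarrow> b \<in> I \<Longrightarrow> a + b \<in> I"
    and ng: "\<And>a. a \<in> I \<Longrightarrow> - a \<in> I"
    and ml: "\<And>a x. a \<in> I \<Longrightarrow> supp_in V x \<Longrightarrow> x * a \<in> I"
  shows "ideal I (poly_ring V)"
proof (rule idealI)
  show "ring (poly_ring V)" by (rule ring_poly_ring)
  show "subgroup I (add_monoid (poly_ring V))"
  proof (rule subgroup.intro)
    show "I \<subseteq> carrier (add_monoid (poly_ring V))" using sub by auto
    show "\<And>x y. x \<in> I \<Longrightarrow> y \<in> I \<Longrightarrow> x \<otimes>\<^bsub>add_monoid (poly_ring V)\<^esub> y \<in> I"
      using ad by simp
    show "\<one>\<^bsub>add_monoid (poly_ring V)\<^esub> \<in> I" using z by simp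
    fix x assume x: "x \<in> I"
    have "inv\<^bsub>add_monoid (poly_ring V)\<^esub> x = a_inv (poly_ring V) x" by (simp add: a_inv_def)
    also have "\<dots> = - x" using sub[OF x] by simp
    finally show "inv\<^bsub>add_monoid (poly_ring V)\<^esub> x \<in> I" using ng[OF x] by simp
  qed
  fix a x :: "('v, 'k) mpoly" assume "a \<in> I" "x \<in> carrier (poly_ring V)"
  then show "x \<otimes>\<^bsub>poly_ring V\<^esub> a \<in> I" "a \<otimes>\<^bsub>poly_ring V\<^esub> x \<in> I"
    using ml by (auto simp: mult.commute)
qed

definition mono_ideal :: "'v set \<Rightarrow> (('v \<Rightarrow>\<^sub>0 nat) \<Rightarrow> bool) \<Rightarrow> ('v, 'k::field) mpoly set" where
  "mono_ideal V D = {p. supp_in V p \<and> (\<forall>m\<in>kys p. D m)}"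

lemma mono_ideal_add: "p \<in> mono_ideal V D \<Longrightarrow> q \<in> mono_ideal V D \<Longrightarrow> p + q \<in> mono_ideal V D"
  unfolding mono_ideal_def using keys_add[of p q] by (auto intro: supp_in_add)

lemma mono_ideal_ideal:
  assumes up: "\<And>m n. D m \<Longrightarrow> D (m + n)"
  shows "ideal (mono_ideal V D :: ('v, 'k::field) mpoly set) (poly_ring V)"
proof (rule ideal_polyI)
  fix a b :: "('v, 'k) mpoly" assume "a \<in> mono_ideal V D" "b \<in> mono_ideal V D"
  then show "a + b \<in> mono_ideal V D"
    unfolding mono_ideal_def using keys_add[of a b] by (auto intro: supp_in_add)
next
  fix a x :: "('v, 'k) mpoly" assume a: "a \<in> mono_ideal V D" and x: "supp_in V x"
  have "\<forall>m\<in>kys (x * a). D m"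
  proof
    fix m assume "m \<in> kys (x * a)"
    then obtain u w where "m = u + w" "u \<in> kys x" "w \<in> kys a" using keys_mult[of x a] by blast
    then show "D m" using a up[of w u] by (auto simp: mono_ideal_def add.commute)
  qed
  then show "x * a \<in> mono_ideal V D" using a x by (auto simp: mono_ideal_def intro: supp_in_mult)
qed (auto simp: mono_ideal_def intro: supp_in_uminus)

lemma mono_ideal_mult:
  assumes "\<And>m n. Da m \<Longrightarrow> Db n \<Longrightarrow> Dc (m + n)"
    and "p \<in> mono_ideal V Da" "q \<in> mono_ideal V Db"
  shows "p * q \<in> mono_ideal V Dc"
proof -
  have "\<forall>m\<in>kys (p * q). Dc m"
  proof
    fix m assume "m \<in> kys (p * q)"
    then obtain u w where "m = u + w" "u \<in> kys p" "w \<in> kys q" using keys_mult[of p q] by blast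
    then show "Dc m" using assms by (auto simp: mono_ideal_def)
  qed
  then show ?thesis using assms by (auto simp: mono_ideal_def intro: supp_in_mult)
qed

section \<open>Variable ideals are prime\<close>

definition Xid :: "'v set \<Rightarrow> 'v set \<Rightarrow> ('v, 'k::field) mpoly set" where
  "Xid V T = mono_ideal V (\<lambda>m. kys m \<inter> T \<noteq> {})"

lemma Xid_ideal: "ideal (Xid V T :: ('v, 'k::field) mpoly set) (poly_ring V)"
  unfolding Xid_def by (rule mono_ideal_ideal) (auto simp: keys_add_nat)

definition lowpart :: "'v set \<Rightarrow> ('v, 'k::field) mpoly \<Rightarrow> ('v, 'k) mpoly" where
  "lowpart T p = Abs_poly_mapping (\<lambda>m. if kys m \<inter> T = {} then lkp p m else 0)"

lemma lookup_lowpart: "lkp (lowpart T p) m = (if kys m \<inter> T = {} then lkp p m else 0)"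
proof -
  have "finite {m. (if kys m \<inter> T = {} then lkp p m else 0) \<noteq> 0}"
    by (rule finite_subset[of _ "kys p"]) (auto simp: in_keys_iff)
  then show ?thesis by (simp add: lowpart_def)
qed

lemma keys_lowpart: "kys (lowpart T p) = {m \<in> kys p. kys m \<inter> T = {}}"
proof -
  have "m \<in> kys (lowpart T p) \<longleftrightarrow> m \<in> kys p \<and> kys m \<inter> T = {}" for m
    by (simp add: in_keys_iff[of m "lowpart T p"] in_keys_iff[of m p] lookup_lowpart)
  then show ?thesis by blast
qed

lemma keys_highpart: "kys (p - lowpart T p) = {m \<in> kys p. kys m \<inter> T \<noteq> {}}"
proof -
  have "m \<in> kys (p - lowpart T p) \<longleftrightarrow> m \<in> kys p \<and> kys m \<inter> T \<noteq> {}" for m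
    by (simp add: in_keys_iff[of m "p - lowpart T p"] in_keys_iff[of m p] lookup_lowpart lookup_minus)
  then show ?thesis by blast
qed

lemma Xid_prime:
  assumes "T \<subseteq> V"
  shows "primeideal (Xid V T :: ('v, 'k::field) mpoly set) (poly_ring V)"
proof (rule primeidealI)
  show "ideal (Xid V T :: ('v, 'k::field) mpoly set) (poly_ring V)" by (rule Xid_ideal)
  show "cring (poly_ring V :: ('v, 'k::field) mpoly ring)" by (rule cring_poly_ring)
  show "carrier (poly_ring V) \<noteq> (Xid V T :: ('v, 'k::field) mpoly set)"
  proof
    assume "carrier (poly_ring V) = (Xid V T :: ('v, 'k::field) mpoly set)"
    then have "(1::('v, 'k) mpoly) \<in> Xid V T" by (metis poly_ring_simps(1) mem_Collect_eq supp_in_1)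
    then show False by (simp add: Xid_def mono_ideal_def)
  qed
  fix a b :: "('v, 'k) mpoly"
  assume a: "a \<in> carrier (poly_ring V)" and b: "b \<in> carrier (poly_ring V)"
    and ab: "a \<otimes>\<^bsub>poly_ring V\<^esub> b \<in> Xid V T"
  show "a \<in> Xid V T \<or> b \<in> Xid V T"
  proof (rule ccontr)
    assume "\<not> ?thesis"
    then have "lowpart T a \<noteq> 0" "lowpart T b \<noteq> 0" using a b
      by (auto simp: Xid_def mono_ideal_def keys_lowpart simp flip: keys_eq_empty)
    then have nz: "lowpart T a * lowpart T b \<noteq> 0" by (rule mpoly_mult_nonzero)
    then obtain m where m: "m \<in> kys (lowpart T a * lowpart T b)" by (metis keys_eq_empty ex_in_conv)
    have mT: "kys m \<inter> T = {}"
    proof -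
      obtain u w where "m = u + w" "u \<in> kys (lowpart T a)" "w \<in> kys (lowpart T b)"
        using m keys_mult by blast
      then show ?thesis by (auto simp: keys_lowpart keys_add_nat)
    qed
    define ah where "ah = a - lowpart T a"
    define bh where "bh = b - lowpart T b"
    have hi: "ah * b + lowpart T a * bh \<in> mono_ideal V (\<lambda>m. kys m \<inter> T \<noteq> {})"
    proof -
      have sa: "supp_in V (lowpart T a)" "supp_in V (lowpart T b)" using a b
        by (auto simp: supp_in_def keys_lowpart)
      have h1: "ah \<in> mono_ideal V (\<lambda>m. kys m \<inter> T \<noteq> {})" using a sa
        by (auto simp: mono_ideal_def ah_def keys_highpart intro: supp_in_diff)
      have h2: "bh \<in> mono_ideal V (\<lambda>m. kys m \<inter> T \<noteq> {})" using b sa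
        by (auto simp: mono_ideal_def bh_def keys_highpart intro: supp_in_diff)
      have h3: "b \<in> mono_ideal V (\<lambda>m. True)" "lowpart T a \<in> mono_ideal V (\<lambda>m. True)"
        using b sa by (auto simp: mono_ideal_def)
      have "ah * b \<in> mono_ideal V (\<lambda>m. kys m \<inter> T \<noteq> {})"
        by (rule mono_ideal_mult[OF _ h1 h3(1)]) (auto simp: keys_add_nat)
      moreover have "lowpart T a * bh \<in> mono_ideal V (\<lambda>m. kys m \<inter> T \<noteq> {})"
        by (rule mono_ideal_mult[OF _ h3(2) h2]) (auto simp: keys_add_nat)
      ultimately show ?thesis by (rule mono_ideal_add)
    qed
    have eq: "a * b = lowpart T a * lowpart T b + (ah * b + lowpart T a * bh)"
      by (simp add: ah_def bh_def algebra_simps)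
    have "m \<notin> kys (ah * b + lowpart T a * bh)" using hi mT by (auto simp: mono_ideal_def)
    then have "lkp (a * b) m = lkp (lowpart T a * lowpart T b) m"
      unfolding eq by (simp add: lookup_add in_keys_iff)
    then have "m \<in> kys (a * b)" using m by (simp add: in_keys_iff)
    then show False using ab mT by (auto simp: Xid_def mono_ideal_def)
  qed
qed


lemma quot_carrier_repr:
  assumes "x \<in> carrier (R Quot J)"
  obtains a where "a \<in> carrier R" "x = J +>\<^bsub>R\<^esub> a"
  using assms unfolding FactRing_def A_RCOSETS_def' by auto

lemma quot_ideal_union_image:
  assumes "cring R" "ideal J R" "ideal Q (R Quot J)"
  shows "a_r_coset R J ` (\<Union>Q) = Q"
proof -
  interpret cring R by fact
  have Qc: "Q \<subseteq> carrier (R Quot J)" using assms(3) ideal.axioms(1) additive_subgroup.a_subset by blast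
  have Uc: "\<Union>Q \<subseteq> carrier R" using canonical_proj_vimage_in_carrier[OF assms(2) Qc] .
  show ?thesis
  proof
    show "a_r_coset R J ` \<Union> Q \<subseteq> Q"
      using canonical_proj_vimage_mem_iff[OF assms(2) Qc] Uc by blast
    show "Q \<subseteq> a_r_coset R J ` \<Union> Q"
    proof
      fix x assume x: "x \<in> Q"
      then obtain a where a: "a \<in> carrier R" "x = J +>\<^bsub>R\<^esub> a" using Qc quot_carrier_repr by blast
      then have "a \<in> \<Union>Q" using canonical_proj_vimage_mem_iff[OF assms(2) Qc a(1)] x by simp
      then show "x \<in> a_r_coset R J ` \<Union> Q" using a by blast
    qed
  qed
qed

lemma quot_prime_pullback:
  assumes "cring R" "ideal J R" "primeideal Q (R Quot J)"
  shows "primeideal (\<Union>Q) R" "J \<subseteq> \<Union>Q"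
proof -
  interpret cring R by fact
  interpret J: ideal J R by fact
  interpret Q: primeideal Q "R Quot J" by fact
  have Qc: "Q \<subseteq> carrier (R Quot J)" by (rule Q.a_subset)
  have hom: "a_r_coset R J \<in> ring_hom R (R Quot J)" by (rule J.rcos_ring_hom)
  have mem: "\<And>a. a \<in> carrier R \<Longrightarrow> (a \<in> \<Union>Q) = (J +>\<^bsub>R\<^esub> a \<in> Q)"
    using canonical_proj_vimage_mem_iff[OF assms(2) Qc] by blast
  have Uc: "\<Union>Q \<subseteq> carrier R" using canonical_proj_vimage_in_carrier[OF assms(2) Qc] .
  show "J \<subseteq> \<Union>Q"
  proof
    fix a assume a: "a \<in> J"
    have "J +>\<^bsub>R\<^esub> a = J" using J.a_rcos_const[OF a] .
    also have "J = \<zero>\<^bsub>R Quot J\<^esub>" by (simp add: FactRing_def)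
    finally have "J +>\<^bsub>R\<^esub> a \<in> Q" using additive_subgroup.zero_closed[OF ideal.axioms(1)[OF Q.is_ideal]] by simp
    then show "a \<in> \<Union>Q" using mem[of a] a J.a_subset by blast
  qed
  show "primeideal (\<Union>Q) R"
  proof (rule primeidealI)
    show "ideal (\<Union>Q) R" using quot_ideal_imp_ring_ideal[OF assms(2) Q.is_ideal] .
    show "cring R" by fact
    show "carrier R \<noteq> \<Union>Q"
    proof
      assume "carrier R = \<Union>Q"
      moreover have o: "\<one>\<^bsub>R\<^esub> \<in> carrier R" by simp
      ultimately have "J +>\<^bsub>R\<^esub> \<one>\<^bsub>R\<^esub> \<in> Q" using mem[OF o] by blast
      moreover have "J +>\<^bsub>R\<^esub> \<one>\<^bsub>R\<^esub> = \<one>\<^bsub>R Quot J\<^esub>" by (simp add: FactRing_def)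
      ultimately have "Q = carrier (R Quot J)" using Q.one_imp_carrier by simp
      then show False using Q.I_notcarr by simp
    qed
    fix a b assume a: "a \<in> carrier R" and b: "b \<in> carrier R" and ab: "a \<otimes>\<^bsub>R\<^esub> b \<in> \<Union>Q"
    have "J +>\<^bsub>R\<^esub> (a \<otimes>\<^bsub>R\<^esub> b) \<in> Q" using mem[of "a \<otimes>\<^bsub>R\<^esub> b"] ab a b by simp
    moreover have "J +>\<^bsub>R\<^esub> (a \<otimes>\<^bsub>R\<^esub> b) = (J +>\<^bsub>R\<^esub> a) \<otimes>\<^bsub>R Quot J\<^esub> (J +>\<^bsub>R\<^esub> b)"
      using ring_hom_mult[OF hom a b] .
    ultimately have "J +>\<^bsub>R\<^esub> a \<in> Q \<or> J +>\<^bsub>R\<^esub> b \<in> Q"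
      using Q.I_prime ring_hom_closed[OF hom a] ring_hom_closed[OF hom b] by simp
    then show "a \<in> \<Union>Q \<or> b \<in> \<Union>Q" using mem a b by blast
  qed
qed

lemma quot_prime_push:
  assumes "cring R" "ideal J R" "primeideal P R" "J \<subseteq> P"
  shows "primeideal (a_r_coset R J ` P) (R Quot J)" "\<Union>(a_r_coset R J ` P) = P"
proof -
  interpret cring R by fact
  interpret J: ideal J R by fact
  interpret P: primeideal P R by fact
  have hom: "a_r_coset R J \<in> ring_hom R (R Quot J)" by (rule J.rcos_ring_hom)
  show U: "\<Union>(a_r_coset R J ` P) = P" using ideal_incl_iff[OF assms(2) P.is_ideal] assms(4) by simp
  have Ic: "a_r_coset R J ` P \<subseteq> carrier (R Quot J)"
    using P.a_subset unfolding FactRing_def A_RCOSETS_def' by auto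
  have mem: "\<And>a. a \<in> carrier R \<Longrightarrow> (a \<in> P) = (J +>\<^bsub>R\<^esub> a \<in> a_r_coset R J ` P)"
    using canonical_proj_vimage_mem_iff[OF assms(2) Ic] U by blast
  show "primeideal (a_r_coset R J ` P) (R Quot J)"
  proof (rule primeidealI)
    show "ideal (a_r_coset R J ` P) (R Quot J)" using ring_ideal_imp_quot_ideal[OF assms(2) P.is_ideal] .
    show "cring (R Quot J)" using J.quotient_is_cring[OF is_cring] .
    show "carrier (R Quot J) \<noteq> a_r_coset R J ` P"
    proof
      assume "carrier (R Quot J) = a_r_coset R J ` P"
      moreover have "J +>\<^bsub>R\<^esub> \<one>\<^bsub>R\<^esub> \<in> carrier (R Quot J)" using ring_hom_closed[OF hom one_closed] .
      ultimately have "\<one>\<^bsub>R\<^esub> \<in> P" using mem[of "\<one>\<^bsub>R\<^esub>"] by simp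
      then show False using P.I_notcarr P.one_imp_carrier by simp
    qed
    fix x y assume x: "x \<in> carrier (R Quot J)" and y: "y \<in> carrier (R Quot J)"
      and xy: "x \<otimes>\<^bsub>R Quot J\<^esub> y \<in> a_r_coset R J ` P"
    obtain a where a: "a \<in> carrier R" "x = J +>\<^bsub>R\<^esub> a" using x quot_carrier_repr by blast
    obtain b where b: "b \<in> carrier R" "y = J +>\<^bsub>R\<^esub> b" using y quot_carrier_repr by blast
    have "x \<otimes>\<^bsub>R Quot J\<^esub> y = J +>\<^bsub>R\<^esub> (a \<otimes>\<^bsub>R\<^esub> b)" using ring_hom_mult[OF hom a(1) b(1)] a b by simp
    then have "a \<otimes>\<^bsub>R\<^esub> b \<in> P" using mem[of "a \<otimes>\<^bsub>R\<^esub> b"] xy a b by simp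
    then have "a \<in> P \<or> b \<in> P" using P.I_prime a b by simp
    then show "x \<in> a_r_coset R J ` P \<or> y \<in> a_r_coset R J ` P" using a b by blast
  qed
qed

lemma krull_dim_quot_eq:
  fixes R :: "('a, 'b) ring_scheme"
  assumes R: "cring R" and J: "ideal J R"
    and up: "\<And>P n. (\<forall>i\<le>n. primeideal (P i) R \<and> J \<subseteq> P i) \<Longrightarrow> (\<forall>i<n. P i \<subset> P (Suc i)) \<Longrightarrow> n \<le> d"
    and low: "\<exists>P. (\<forall>i\<le>d. primeideal (P i) R \<and> J \<subseteq> P i) \<and> (\<forall>i<d. P i \<subset> P (Suc i))"
  shows "krull_dim (R Quot J) = enat d"
proof -
  define N where "N = {n. \<exists>P. (\<forall>i\<le>n. primeideal (P i) (R Quot J)) \<and> (\<forall>i<n. P i \<subset> P (Suc i))}"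
  have ub: "n \<le> d" if nN: "n \<in> N" for n
  proof -
    obtain Q where Q: "\<forall>i\<le>n. primeideal (Q i) (R Quot J)" "\<forall>i<n. Q i \<subset> Q (Suc i)"
      using nN unfolding N_def by auto
    define P where "P i = \<Union>(Q i)" for i
    have "\<forall>i\<le>n. primeideal (P i) R \<and> J \<subseteq> P i"
      using Q(1) quot_prime_pullback[OF R J] unfolding P_def by simp
    moreover have "\<forall>i<n. P i \<subset> P (Suc i)"
    proof (intro allI impI)
      fix i assume i: "i < n"
      have "Q i \<subseteq> Q (Suc i)" using Q(2) i by auto
      then have "P i \<subseteq> P (Suc i)" unfolding P_def by (rule Union_mono)
      moreover have "P i \<noteq> P (Suc i)"
      proof
        assume "P i = P (Suc i)"
        then have eqP: "\<Union>(Q i) = \<Union>(Q (Suc i))" unfolding P_def .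
        have i1: "ideal (Q i) (R Quot J)"
          using Q(1) i by (intro primeideal.axioms(1)) simp
        have i2: "ideal (Q (Suc i)) (R Quot J)"
          using Q(1) i by (intro primeideal.axioms(1)) (simp add: Suc_le_eq)
        have "Q i = a_r_coset R J ` (\<Union>(Q i))" using quot_ideal_union_image[OF R J i1] by simp
        also have "\<dots> = a_r_coset R J ` (\<Union>(Q (Suc i)))" using eqP by simp
        also have "\<dots> = Q (Suc i)" using quot_ideal_union_image[OF R J i2] by simp
        finally have "Q i = Q (Suc i)" .
        then show False using Q(2) i by blast
      qed
      ultimately show "P i \<subset> P (Suc i)" by blast
    qed
    ultimately show ?thesis by (intro up) auto
  qed
  have dN: "d \<in> N"
  proof -
    obtain P where P: "\<forall>i\<le>d. primeideal (P i) R \<and> J \<subseteq> P i" "\<forall>i<d. P i \<subset> P (Suc i)"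
      using low by auto
    define Q where "Q i = a_r_coset R J ` P i" for i
    have "\<forall>i\<le>d. primeideal (Q i) (R Quot J)" using P(1) quot_prime_push(1)[OF R J] unfolding Q_def by simp
    moreover have "\<forall>i<d. Q i \<subset> Q (Suc i)"
    proof (intro allI impI)
      fix i assume i: "i < d"
      have "P i \<subseteq> P (Suc i)" using P(2) i by auto
      then have "Q i \<subseteq> Q (Suc i)" unfolding Q_def by (rule image_mono)
      moreover have "Q i \<noteq> Q (Suc i)"
      proof
        assume "Q i = Q (Suc i)"
        then have eqQ: "\<Union>(Q i) = \<Union>(Q (Suc i))" by simp
        have p1: "primeideal (P i) R" "J \<subseteq> P i" using P(1) i by simp_all
        have p2: "primeideal (P (Suc i)) R" "J \<subseteq> P (Suc i)" using P(1) i by (simp_all add: Suc_le_eq)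
        have "P i = \<Union>(Q i)" using quot_prime_push(2)[OF R J p1] unfolding Q_def by simp
        also have "\<dots> = \<Union>(Q (Suc i))" by (rule eqQ)
        also have "\<dots> = P (Suc i)" using quot_prime_push(2)[OF R J p2] unfolding Q_def by simp
        finally have "P i = P (Suc i)" .
        then show False using P(2) i by blast
      qed
      ultimately show "Q i \<subset> Q (Suc i)" by blast
    qed
    ultimately show ?thesis unfolding N_def by (intro CollectI exI[of _ Q]) simp
  qed
  have "krull_dim (R Quot J) = (SUP n\<in>N. enat n)" unfolding krull_dim_def N_def by simp
  also have "\<dots> = enat d"
  proof (rule antisym)
    show "(SUP n\<in>N. enat n) \<le> enat d" by (rule SUP_least) (simp add: ub)
    show "enat d \<le> (SUP n\<in>N. enat n)" by (rule SUP_upper[OF dN])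
  qed
  finally show ?thesis .
qed


definition hleaf :: "'i set \<Rightarrow> ('i \<Rightarrow> 'v set) \<Rightarrow> bool" where
  "hleaf I E \<longleftrightarrow> (\<forall>J\<subseteq>I. J \<noteq> {} \<longrightarrow> (\<exists>F\<in>J. J = {F} \<or>
      (\<exists>G\<in>J. G \<noteq> F \<and> (\<forall>H\<in>J. H \<noteq> F \<longrightarrow> E F \<inter> E H \<subseteq> E F \<inter> E G))))"

lemma hleafD:
  assumes "hleaf I E" "J \<subseteq> I" "J \<noteq> {}"
  shows "\<exists>F\<in>J. J = {F} \<or> (\<exists>G\<in>J. G \<noteq> F \<and> (\<forall>H\<in>J. H \<noteq> F \<longrightarrow> E F \<inter> E H \<subseteq> E F \<inter> E G))"
  using assms unfolding hleaf_def by simp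

lemma hleaf_subset: "hleaf I E \<Longrightarrow> I' \<subseteq> I \<Longrightarrow> hleaf I' E"
  unfolding hleaf_def by (intro allI impI) simp

lemma hleaf_cong:
  assumes "hleaf I E" "\<And>a b. a \<in> I \<Longrightarrow> b \<in> I \<Longrightarrow> a \<noteq> b \<Longrightarrow> E' a \<inter> E' b = E a \<inter> E b"
  shows "hleaf I E'"
  unfolding hleaf_def
proof (intro allI impI)
  fix J assume J: "J \<subseteq> I" "J \<noteq> {}"
  then obtain F where F: "F \<in> J" "J = {F} \<or>
      (\<exists>G\<in>J. G \<noteq> F \<and> (\<forall>H\<in>J. H \<noteq> F \<longrightarrow> E F \<inter> E H \<subseteq> E F \<inter> E G))"
    using hleafD[OF assms(1) J] by auto
  show "\<exists>F\<in>J. J = {F} \<or> (\<exists>G\<in>J. G \<noteq> F \<and> (\<forall>H\<in>J. H \<noteq> F \<longrightarrow> E' F \<inter> E' H \<subseteq> E' F \<inter> E' G))"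
  proof (rule bexI[OF _ F(1)])
    show "J = {F} \<or> (\<exists>G\<in>J. G \<noteq> F \<and> (\<forall>H\<in>J. H \<noteq> F \<longrightarrow> E' F \<inter> E' H \<subseteq> E' F \<inter> E' G))"
    proof (cases "J = {F}")
      case False
      then obtain G where G: "G \<in> J" "G \<noteq> F" "\<forall>H\<in>J. H \<noteq> F \<longrightarrow> E F \<inter> E H \<subseteq> E F \<inter> E G"
        using F(2) by blast
      have "\<forall>H\<in>J. H \<noteq> F \<longrightarrow> E' F \<inter> E' H \<subseteq> E' F \<inter> E' G"
      proof (intro ballI impI)
        fix H assume "H \<in> J" "H \<noteq> F"
        then show "E' F \<inter> E' H \<subseteq> E' F \<inter> E' G"
          using G assms(2)[of F H] assms(2)[of F G] J(1) F(1) by auto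
      qed
      then show ?thesis using G by blast
    qed simp
  qed
qed

lemma koenig_indexed:
  fixes I :: "'i set" and E :: "'i \<Rightarrow> 'v set"
  assumes "finite I" "\<And>i. i \<in> I \<Longrightarrow> finite (E i) \<and> E i \<noteq> {}" "hleaf I E"
  shows "\<exists>C M. M \<subseteq> I \<and> (\<forall>i\<in>M. \<forall>j\<in>M. i \<noteq> j \<longrightarrow> E i \<inter> E j = {})
           \<and> (\<forall>i\<in>I. E i \<inter> C \<noteq> {}) \<and> finite C \<and> card C \<le> card M"
  using assms
proof (induction "card I + (\<Sum>i\<in>I. card (E i))" arbitrary: I E rule: less_induct)
  case less
  note fin = less.prems(1) and ne = less.prems(2) and hl = less.prems(3)
  show ?case
  proof (cases "I = {}")
    case True
    then show ?thesis by (intro exI[of _ "{}"]) auto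
  next
    case Ine: False
    obtain F where F: "F \<in> I" "I = {F} \<or>
      (\<exists>G\<in>I. G \<noteq> F \<and> (\<forall>H\<in>I. H \<noteq> F \<longrightarrow> E F \<inter> E H \<subseteq> E F \<inter> E G))"
      using hleafD[OF hl _ Ine] by auto
    show ?thesis
    proof (cases "I = {F}")
      case True
      obtain v where v: "v \<in> E F" using ne F(1) by blast
      show ?thesis using True v by (intro exI[of _ "{v}"] exI[of _ "{F}"]) auto
    next
      case False
      then obtain G where G: "G \<in> I" "G \<noteq> F" "\<And>H. H \<in> I \<Longrightarrow> H \<noteq> F \<Longrightarrow> E F \<inter> E H \<subseteq> E F \<inter> E G"
        using F(2) by blast
      show ?thesis
      proof (cases "E F \<inter> E G = {}")
        case True
        then have disj: "\<And>H. H \<in> I \<Longrightarrow> H \<noteq> F \<Longrightarrow> E F \<inter> E H = {}" using G(3) by blast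
        have lt: "card (I - {F}) + (\<Sum>i\<in>I - {F}. card (E i)) < card I + (\<Sum>i\<in>I. card (E i))"
          using fin F(1) by (intro add_less_le_mono card_Diff1_less sum_mono2) auto
        obtain C M where CM: "M \<subseteq> I - {F}" "\<forall>i\<in>M. \<forall>j\<in>M. i \<noteq> j \<longrightarrow> E i \<inter> E j = {}"
          "\<forall>i\<in>I - {F}. E i \<inter> C \<noteq> {}" "finite C" "card C \<le> card M"
          using less.hyps[OF lt] fin ne hleaf_subset[OF hl] by auto
        obtain v where v: "v \<in> E F" using ne F(1) by blast
        have "finite M" using CM(1) fin finite_subset by blast
        have "card (insert v C) \<le> card (insert F M)"
          using CM(1,4,5) \<open>finite M\<close> card_insert_le_m1 by (auto simp: card_insert_if)
        moreover have "\<forall>i\<in>insert F M. \<forall>j\<in>insert F M. i \<noteq> j \<longrightarrow> E i \<inter> E j = {}"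
          using CM(1,2) disj by blast
        moreover have "\<forall>i\<in>I. E i \<inter> insert v C \<noteq> {}" using CM(3) v by blast
        ultimately show ?thesis using CM(1,4) F(1)
          by (intro exI[of _ "insert v C"] exI[of _ "insert F M"]) auto
      next
        case inter: False
        show ?thesis
        proof (cases "E F \<subseteq> E G")
          case True
          have lt: "card (I - {G}) + (\<Sum>i\<in>I - {G}. card (E i)) < card I + (\<Sum>i\<in>I. card (E i))"
            using fin G(1) by (intro add_less_le_mono card_Diff1_less sum_mono2) auto
          obtain C M where CM: "M \<subseteq> I - {G}" "\<forall>i\<in>M. \<forall>j\<in>M. i \<noteq> j \<longrightarrow> E i \<inter> E j = {}"
            "\<forall>i\<in>I - {G}. E i \<inter> C \<noteq> {}" "finite C" "card C \<le> card M"
            using less.hyps[OF lt] fin ne hleaf_subset[OF hl] by auto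
          have "E F \<inter> C \<noteq> {}" using CM(3) F(1) G(2) by blast
          then have "\<forall>i\<in>I. E i \<inter> C \<noteq> {}" using CM(3) True by blast
          then show ?thesis using CM by (intro exI[of _ C] exI[of _ M]) auto
        next
          case False
          then obtain v where v: "v \<in> E F" "v \<notin> E G" by blast
          have free: "\<And>H. H \<in> I \<Longrightarrow> H \<noteq> F \<Longrightarrow> v \<notin> E H" using G(3) v by blast
          define E' where "E' = E(F := E F - {v})"
          have ne': "\<And>i. i \<in> I \<Longrightarrow> finite (E' i) \<and> E' i \<noteq> {}"
            using ne inter v unfolding E'_def by auto
          have same: "\<And>a b. a \<in> I \<Longrightarrow> b \<in> I \<Longrightarrow> a \<noteq> b \<Longrightarrow> E' a \<inter> E' b = E a \<inter> E b"
            unfolding E'_def using free by auto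
          have hl': "hleaf I E'" by (rule hleaf_cong[OF hl same])
          have "(\<Sum>i\<in>I. card (E' i)) < (\<Sum>i\<in>I. card (E i))"
          proof (rule sum_strict_mono_ex1[OF fin])
            show "\<forall>i\<in>I. card (E' i) \<le> card (E i)"
              unfolding E'_def using ne by (auto intro: card_mono)
            show "\<exists>i\<in>I. card (E' i) < card (E i)"
              using F(1) ne[OF F(1)] v unfolding E'_def by (intro bexI[of _ F]) (simp add: card_gt_0_iff)
          qed
          then have lt: "card I + (\<Sum>i\<in>I. card (E' i)) < card I + (\<Sum>i\<in>I. card (E i))" by simp
          obtain C M where CM: "M \<subseteq> I" "\<forall>i\<in>M. \<forall>j\<in>M. i \<noteq> j \<longrightarrow> E' i \<inter> E' j = {}"
            "\<forall>i\<in>I. E' i \<inter> C \<noteq> {}" "finite C" "card C \<le> card M"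
            using less.hyps[OF lt fin ne' hl'] by blast
          have "\<forall>i\<in>M. \<forall>j\<in>M. i \<noteq> j \<longrightarrow> E i \<inter> E j = {}" using CM(1,2) same by blast
          moreover have "\<forall>i\<in>I. E i \<inter> C \<noteq> {}"
          proof
            fix i assume "i \<in> I"
            then have "E' i \<inter> C \<noteq> {}" using CM(3) by blast
            moreover have "E' i \<subseteq> E i" unfolding E'_def by auto
            ultimately show "E i \<inter> C \<noteq> {}" by blast
          qed
          ultimately show ?thesis using CM by (intro exI[of _ C] exI[of _ M]) auto
        qed
      qed
    qed
  qed
qed

section \<open>Forests have hereditary leaves\<close>

lemma forest_hleaf:
  assumes fs: "facet_set Fs" and fo: "simplicial_forest Fs"
  shows "hleaf Fs (\<lambda>x. x)"
  unfolding hleaf_def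
proof (intro allI impI)
  fix Gs assume Gs: "Gs \<subseteq> Fs" "Gs \<noteq> {}"
  then obtain F0 where F0: "F0 \<in> Gs" by blast
  define rel where "rel = {(A, B). A \<in> Fs \<and> B \<in> Fs \<and> A \<inter> B \<noteq> {}}"
  define C where "C = {G \<in> Fs. (F0, G) \<in> rel\<^sup>*}"
  define relC where "relC = {(A, B). A \<in> C \<and> B \<in> C \<and> A \<inter> B \<noteq> {}}"
  have F0C: "F0 \<in> C" using F0 Gs unfolding C_def by auto
  have reach: "(F0, G) \<in> relC\<^sup>*" if "(F0, G) \<in> rel\<^sup>*" for G
    using that
  proof (induction rule: rtrancl_induct)
    case base then show ?case by simp
  next
    case (step B D)
    have "B \<in> C" using step.hyps(1,2) unfolding C_def rel_def by auto
    moreover have "(F0, D) \<in> rel\<^sup>*" using step.hyps(1,2) by (rule rtrancl_into_rtrancl)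
    then have "D \<in> C" using step.hyps(2) unfolding C_def rel_def by auto
    ultimately have "(B, D) \<in> relC" using step.hyps(2) unfolding relC_def rel_def by auto
    with step.IH show ?case by (rule rtrancl_into_rtrancl)
  qed
  have symC: "sym relC" unfolding relC_def sym_def by auto
  have comp: "cx_component Fs C"
    unfolding cx_component_def
  proof (intro conjI)
    show "C \<noteq> {}" using F0C by blast
    show "C \<subseteq> Fs" unfolding C_def by blast
    show "cx_connected C" unfolding cx_connected_def
    proof (intro ballI)
      fix F G assume F: "F \<in> C" and G: "G \<in> C"
      have "(F0, F) \<in> relC\<^sup>*" "(F0, G) \<in> relC\<^sup>*" using F G reach unfolding C_def by auto
      then have "(F, F0) \<in> relC\<^sup>*" "(F0, G) \<in> relC\<^sup>*"
        using symC by (auto intro: symD[OF sym_rtrancl])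
      then have "(F, G) \<in> relC\<^sup>*" by (rule rtrancl_trans)
      then show "(F, G) \<in> {(A, B). A \<in> C \<and> B \<in> C \<and> A \<inter> B \<noteq> {}}\<^sup>*"
        unfolding relC_def .
    qed
    show "\<forall>F\<in>Fs - C. \<forall>G\<in>C. F \<inter> G = {}"
    proof (intro ballI)
      fix F G assume F: "F \<in> Fs - C" and G: "G \<in> C"
      show "F \<inter> G = {}"
      proof (rule ccontr)
        assume "F \<inter> G \<noteq> {}"
        then have "(G, F) \<in> rel" using F G unfolding rel_def C_def by auto
        moreover have "(F0, G) \<in> rel\<^sup>*" using G unfolding C_def by auto
        ultimately have "(F0, F) \<in> rel\<^sup>*" by (rule rtrancl_into_rtrancl[rotated])
        then show False using F unfolding C_def by auto
      qed
    qed
  qed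
  then have tree: "simplicial_tree C" using fo unfolding simplicial_forest_def by simp
  have "Gs \<inter> C \<subseteq> C \<and> Gs \<inter> C \<noteq> {}" using F0 F0C by auto
  then have "\<exists>L. is_leaf (Gs \<inter> C) L" using tree unfolding simplicial_tree_def by simp
  then obtain L where L: "is_leaf (Gs \<inter> C) L" by blast
  have LC: "L \<in> Gs" "L \<in> C" using L unfolding is_leaf_def by auto
  have sep: "\<forall>F\<in>Fs - C. \<forall>G\<in>C. F \<inter> G = {}" using comp unfolding cx_component_def by simp
  have out: "L \<inter> H = {}" if "H \<in> Gs" "H \<notin> C" for H
  proof -
    have "H \<in> Fs - C" using that Gs(1) by auto
    then have "H \<inter> L = {}" using sep LC(2) by simp
    then show ?thesis by auto
  qed
  show "\<exists>F\<in>Gs. Gs = {F} \<or> (\<exists>G\<in>Gs. G \<noteq> F \<and> (\<forall>H\<in>Gs. H \<noteq> F \<longrightarrow> F \<inter> H \<subseteq> F \<inter> G))"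
  proof (rule bexI[OF _ LC(1)])
    show "Gs = {L} \<or> (\<exists>G\<in>Gs. G \<noteq> L \<and> (\<forall>H\<in>Gs. H \<noteq> L \<longrightarrow> L \<inter> H \<subseteq> L \<inter> G))"
    proof (cases "Gs \<inter> C = {L}")
      case True
      show ?thesis
      proof (cases "Gs = {L}")
        case False
        then obtain G' where G': "G' \<in> Gs" "G' \<noteq> L" using LC(1) by blast
        have "\<forall>H\<in>Gs. H \<noteq> L \<longrightarrow> L \<inter> H \<subseteq> L \<inter> G'"
        proof (intro ballI impI)
          fix H assume "H \<in> Gs" "H \<noteq> L"
          then have "H \<notin> C" using True by blast
          then show "L \<inter> H \<subseteq> L \<inter> G'" using out \<open>H \<in> Gs\<close> by simp
        qed
        then show ?thesis using G' by blast
      qed simp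
    next
      case False
      then obtain G where G: "G \<in> Gs \<inter> C" "G \<noteq> L"
        "\<forall>H\<in>Gs \<inter> C. H \<noteq> L \<longrightarrow> L \<inter> H \<subseteq> L \<inter> G"
        using L unfolding is_leaf_def by auto
      have "\<forall>H\<in>Gs. H \<noteq> L \<longrightarrow> L \<inter> H \<subseteq> L \<inter> G"
      proof (intro ballI impI)
        fix H assume H: "H \<in> Gs" "H \<noteq> L"
        show "L \<inter> H \<subseteq> L \<inter> G"
        proof (cases "H \<in> C")
          case True then show ?thesis using G(3) H by blast
        next
          case False then show ?thesis using out H by simp
        qed
      qed
      then show ?thesis using G by blast
    qed
  qed
qed

lemma koenig:
  assumes fs: "facet_set Fs" and fo: "simplicial_forest Fs"
  shows "\<exists>C M. M \<subseteq> Fs \<and> pairwise disjnt M \<and> (\<forall>F\<in>Fs. F \<inter> C \<noteq> {}) \<and> finite C \<and> card C \<le> card M"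
proof -
  have "finite Fs" "\<And>F. F \<in> Fs \<Longrightarrow> finite F \<and> F \<noteq> {}" using fs unfolding facet_set_def by auto
  from koenig_indexed[OF this forest_hleaf[OF fs fo]]
  obtain C M where CM: "M \<subseteq> Fs" "\<forall>i\<in>M. \<forall>j\<in>M. i \<noteq> j \<longrightarrow> i \<inter> j = {}"
    "\<forall>i\<in>Fs. i \<inter> C \<noteq> {}" "finite C" "card C \<le> card M" by auto
  have "pairwise disjnt M" using CM(2) unfolding pairwise_def disjnt_def by simp
  then show ?thesis using CM by (intro exI[of _ C] exI[of _ M]) simp
qed

lemma matching_le_cover:
  assumes "finite C" "pairwise disjnt M" "\<And>F. F \<in> M \<Longrightarrow> F \<inter> C \<noteq> {}"
  shows "card M \<le> card C"
proof -
  define f where "f F = (SOME v. v \<in> F \<inter> C)" for F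
  have f: "f F \<in> F \<inter> C" if "F \<in> M" for F
  proof -
    have "\<exists>v. v \<in> F \<inter> C" using assms(3)[OF that] by blast
    then show ?thesis unfolding f_def by (rule someI_ex)
  qed
  have "inj_on f M"
  proof (rule inj_onI)
    fix F G assume "F \<in> M" "G \<in> M" "f F = f G"
    then have "f F \<in> F \<inter> G" using f[of F] f[of G] by simp
    then have "F \<inter> G \<noteq> {}" by blast
    then show "F = G" using assms(2) \<open>F \<in> M\<close> \<open>G \<in> M\<close> unfolding pairwise_def disjnt_def by auto
  qed
  moreover have "f ` M \<subseteq> C" using f by auto
  ultimately show ?thesis by (rule card_inj_on_le[OF _ _ assms(1)])
qed

lemma matching_number_ge:
  assumes "finite Fs" "M \<subseteq> Fs" "pairwise disjnt M"
  shows "card M \<le> matching_number Fs"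
proof -
  have "finite {card M | M. M \<subseteq> Fs \<and> pairwise disjnt M}"
  proof (rule finite_subset[of _ "card ` Pow Fs"])
    show "{card M | M. M \<subseteq> Fs \<and> pairwise disjnt M} \<subseteq> card ` Pow Fs" by auto
  qed (use assms(1) in simp)
  moreover have "card M \<in> {card M | M. M \<subseteq> Fs \<and> pairwise disjnt M}" using assms by auto
  ultimately show ?thesis unfolding matching_number_def by (rule Max_ge)
qed

lemma matching_number_obtain:
  assumes "finite Fs"
  obtains M where "M \<subseteq> Fs" "pairwise disjnt M" "card M = matching_number Fs"
proof -
  have fin: "finite {card M | M. M \<subseteq> Fs \<and> pairwise disjnt M}"
  proof (rule finite_subset[of _ "card ` Pow Fs"])
    show "{card M | M. M \<subseteq> Fs \<and> pairwise disjnt M} \<subseteq> card ` Pow Fs" by auto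
  qed (use assms(1) in simp)
  have ne: "{card M | M. M \<subseteq> Fs \<and> pairwise disjnt M} \<noteq> {}" by auto
  from Max_in[OF fin ne] obtain M where "M \<subseteq> Fs" "pairwise disjnt M"
    "card M = Max {card M | M. M \<subseteq> Fs \<and> pairwise disjnt M}" by auto
  then show ?thesis using that unfolding matching_number_def by simp
qed


definition cntF :: "'v set list \<Rightarrow> 'v \<Rightarrow> nat" where
  "cntF Fl v = length (filter (\<lambda>F. v \<in> F) Fl)"

definition Dk :: "'v set set \<Rightarrow> nat \<Rightarrow> ('v \<Rightarrow>\<^sub>0 nat) \<Rightarrow> bool" where
  "Dk Fs k m \<longleftrightarrow> (\<exists>Fl. length Fl = k \<and> set Fl \<subseteq> Fs \<and> (\<forall>v. cntF Fl v \<le> lkp m v))"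

lemma cntF_append: "cntF (xs @ ys) v = cntF xs v + cntF ys v"
  by (simp add: cntF_def)

lemma Dk_up: "Dk Fs k m \<Longrightarrow> Dk Fs k (m + n)"
proof -
  assume "Dk Fs k m"
  then obtain Fl where Fl: "length Fl = k" "set Fl \<subseteq> Fs" "\<forall>v. cntF Fl v \<le> lkp m v" unfolding Dk_def by blast
  have "\<forall>v. cntF Fl v \<le> lkp (m + n) v"
  proof
    fix v have "cntF Fl v \<le> lkp m v" using Fl(3) by blast
    then show "cntF Fl v \<le> lkp (m + n) v" by (simp add: lookup_add)
  qed
  then show ?thesis using Fl unfolding Dk_def by blast
qed

lemma Dk_add: "Dk Fs a m \<Longrightarrow> Dk Fs b n \<Longrightarrow> Dk Fs (a + b) (m + n)"
proof -
  assume "Dk Fs a m" "Dk Fs b n"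
  then obtain xs ys where "length xs = a" "set xs \<subseteq> Fs" "\<forall>v. cntF xs v \<le> lkp m v"
    "length ys = b" "set ys \<subseteq> Fs" "\<forall>v. cntF ys v \<le> lkp n v" unfolding Dk_def by blast
  then show ?thesis unfolding Dk_def
    by (intro exI[of _ "xs @ ys"]) (auto simp: cntF_append lookup_add add_mono)
qed

definition ind :: "'v set \<Rightarrow> ('v \<Rightarrow>\<^sub>0 nat)" where
  "ind S = (\<Sum>v\<in>S. sng v 1)"

lemma lookup_ind: "finite S \<Longrightarrow> lkp (ind S) w = (if w \<in> S then 1 else 0)"
  by (simp add: ind_def lookup_sum lookup_single when_def)

lemma keys_xmon: "finite S \<Longrightarrow> kys (xmon S :: ('v, 'k::field) mpoly) = {ind S}"
  by (simp add: xmon_eq ind_def)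

lemma Dk_one: "F \<in> Fs \<Longrightarrow> finite F \<Longrightarrow> Dk Fs 1 (ind F)"
  unfolding Dk_def by (intro exI[of _ "[F]"]) (auto simp: cntF_def lookup_ind)

lemma Dk_zero: "Dk Fs 0 m"
  unfolding Dk_def by (intro exI[of _ "[]"]) (auto simp: cntF_def)

lemma xmon_union: "finite A \<Longrightarrow> finite B \<Longrightarrow> A \<inter> B = {} \<Longrightarrow> xmon (A \<union> B) = (xmon A * xmon B :: ('v, 'k::field) mpoly)"
  unfolding xmon_def by (rule prod.union_disjoint)

lemma facet_ideal_in_L1:
  assumes fs: "facet_set Fs" and V: "\<Union>Fs \<subseteq> V"
  shows "facet_ideal (poly_ring V) Fs \<subseteq> (mono_ideal V (Dk Fs 1) :: ('v, 'k::field) mpoly set)"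
  unfolding facet_ideal_def
proof (rule ring.genideal_minimal[OF ring_poly_ring])
  show "ideal (mono_ideal V (Dk Fs 1) :: ('v, 'k::field) mpoly set) (poly_ring V)"
    by (rule mono_ideal_ideal) (rule Dk_up)
  show "xmon ` Fs \<subseteq> (mono_ideal V (Dk Fs 1) :: ('v, 'k::field) mpoly set)"
  proof
    fix x assume "x \<in> (xmon ` Fs :: ('v, 'k::field) mpoly set)"
    then obtain F where F: "F \<in> Fs" "x = xmon F" by blast
    have fin: "finite F" using fs F unfolding facet_set_def by auto
    have "supp_in V x" using F fin V by (auto intro: xmon_supp)
    moreover have "Dk Fs 1 (ind F)" by (rule Dk_one[OF F(1) fin])
    moreover have "kys x = {ind F}" using F(2) keys_xmon[OF fin] by simp
    ultimately show "x \<in> mono_ideal V (Dk Fs 1)"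
      unfolding mono_ideal_def by simp
  qed
qed

lemma ideal_pow_in_L:
  assumes fs: "facet_set Fs" and V: "\<Union>Fs \<subseteq> V"
  shows "ideal_pow (poly_ring V) (facet_ideal (poly_ring V) Fs) k \<subseteq> (mono_ideal V (Dk Fs k) :: ('v, 'k::field) mpoly set)"
proof (induction k)
  case 0
  then show ?case by (auto simp: mono_ideal_def Dk_zero)
next
  case (Suc k)
  show ?case
  proof
    fix x :: "('v, 'k) mpoly" assume "x \<in> ideal_pow (poly_ring V) (facet_ideal (poly_ring V) Fs) (Suc k)"
    then have "x \<in> ideal_prod (poly_ring V) (facet_ideal (poly_ring V) Fs)
                  (ideal_pow (poly_ring V) (facet_ideal (poly_ring V) Fs) k)" by simp
    then show "x \<in> mono_ideal V (Dk Fs (Suc k))"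
    proof (induction x rule: ideal_prod.induct)
      case (prod i j)
      have i: "i \<in> mono_ideal V (Dk Fs 1)" using facet_ideal_in_L1[OF fs V] prod.hyps(1) by blast
      have j: "j \<in> mono_ideal V (Dk Fs k)" using subsetD[OF Suc.IH prod.hyps(2)] .
      have "i * j \<in> mono_ideal V (Dk Fs (Suc k))"
        by (rule mono_ideal_mult[OF _ i j]) (metis Dk_add plus_1_eq_Suc)
      then show ?case by simp
    next
      case (sum s1 s2)
      then show ?case by (simp add: mono_ideal_add)
    qed
  qed
qed

lemma cntF_pos: "F \<in> set Fl \<Longrightarrow> v \<in> F \<Longrightarrow> cntF Fl v \<ge> 1"
  unfolding cntF_def by (induct Fl) auto

lemma cntF_le1_imp:
  assumes "\<forall>v. cntF Fl v \<le> 1" "\<forall>F\<in>set Fl. F \<noteq> {}"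
  shows "distinct Fl \<and> pairwise disjnt (set Fl)"
  using assms
proof (induction Fl)
  case Nil then show ?case by simp
next
  case (Cons F Fl)
  have c: "cntF (F # Fl) v = (if v \<in> F then 1 else 0) + cntF Fl v" for v
    by (simp add: cntF_def)
  have "\<forall>v. cntF Fl v \<le> 1"
  proof
    fix v show "cntF Fl v \<le> 1" using Cons.prems(1) c[of v] by (metis add_leD2)
  qed
  then have IH: "distinct Fl \<and> pairwise disjnt (set Fl)"
    using Cons.IH Cons.prems(2) by simp
  have dis: "disjnt F G" if "G \<in> set Fl" for G
  proof -
    have "v \<notin> G" if "v \<in> F" for v
    proof
      assume "v \<in> G"
      then have "cntF Fl v \<ge> 1" using \<open>G \<in> set Fl\<close> by (rule cntF_pos[rotated])
      moreover have "cntF (F # Fl) v \<le> 1" using Cons.prems(1) by blast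
      ultimately show False using c[of v] \<open>v \<in> F\<close> by simp
    qed
    then show ?thesis unfolding disjnt_def by blast
  qed
  have "F \<notin> set Fl"
  proof
    assume "F \<in> set Fl"
    then have "disjnt F F" by (rule dis)
    then show False using Cons.prems(2) by (simp add: disjnt_def)
  qed
  then show ?case using IH dis by (auto simp: pairwise_insert disjnt_sym)
qed

lemma gen_has_matching:
  assumes fs: "facet_set Fs" and V: "\<Union>Fs \<subseteq> V" and S: "finite S"
    and x: "(xmon S :: ('v, 'k::field) mpoly) \<in> ideal_pow (poly_ring V) (facet_ideal (poly_ring V) Fs) k"
  shows "\<exists>M. M \<subseteq> Fs \<and> card M = k \<and> pairwise disjnt M \<and> \<Union>M \<subseteq> S"
proof -
  have "(xmon S :: ('v, 'k::field) mpoly) \<in> mono_ideal V (Dk Fs k)" using ideal_pow_in_L[OF fs V] x by blast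
  then have "Dk Fs k (ind S)" using S by (simp add: mono_ideal_def keys_xmon)
  then obtain Fl where Fl: "length Fl = k" "set Fl \<subseteq> Fs" "\<forall>v. cntF Fl v \<le> lkp (ind S) v"
    unfolding Dk_def by blast
  have le1: "\<forall>v. cntF Fl v \<le> 1"
  proof
    fix v have "cntF Fl v \<le> lkp (ind S) v" using Fl(3) by blast
    also have "\<dots> \<le> 1" using S by (simp add: lookup_ind)
    finally show "cntF Fl v \<le> 1" .
  qed
  have nne: "\<forall>F\<in>set Fl. F \<noteq> {}" using Fl(2) fs unfolding facet_set_def by blast
  have dp: "distinct Fl \<and> pairwise disjnt (set Fl)" by (rule cntF_le1_imp[OF le1 nne])
  have sub: "\<Union>(set Fl) \<subseteq> S"
  proof
    fix v assume "v \<in> \<Union>(set Fl)"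
    then obtain F where "F \<in> set Fl" "v \<in> F" by blast
    then have "cntF Fl v \<ge> 1" by (rule cntF_pos)
    also have "cntF Fl v \<le> lkp (ind S) v" using Fl(3) by blast
    finally have "lkp (ind S) v \<ge> 1" .
    then show "v \<in> S" using S by (simp add: lookup_ind split: if_splits)
  qed
  show ?thesis using Fl dp sub distinct_card by (intro exI[of _ "set Fl"]) auto
qed

lemma matching_gen:
  assumes fs: "facet_set Fs" and V: "\<Union>Fs \<subseteq> V"
    and M: "M \<subseteq> Fs" "pairwise disjnt M"
  shows "(xmon (\<Union>M) :: ('v, 'k::field) mpoly) \<in> ideal_pow (poly_ring V) (facet_ideal (poly_ring V) Fs) (card M)"
proof -
  have finFs: "finite Fs" and finF: "\<And>F. F \<in> Fs \<Longrightarrow> finite F" using fs unfolding facet_set_def by auto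
  have "finite M" using M(1) finFs finite_subset by blast
  then show ?thesis using M
  proof (induction M rule: finite_induct)
    case empty
    then show ?case by (simp add: xmon_def)
  next
    case (insert F M)
    have F: "F \<in> Fs" using insert by auto
    have IH: "(xmon (\<Union>M) :: ('v, 'k::field) mpoly) \<in> ideal_pow (poly_ring V) (facet_ideal (poly_ring V) Fs) (card M)"
      using insert by (auto simp: pairwise_insert)
    have dj: "F \<inter> \<Union>M = {}" using insert.prems(2) insert.hyps(2) unfolding pairwise_def disjnt_def by auto
    have finU: "finite (\<Union>M)" using insert finF by auto
    have "(xmon (\<Union>(insert F M)) :: ('v, 'k::field) mpoly) = xmon F * xmon (\<Union>M)"
      using xmon_union[OF finF[OF F] finU dj] by simp
    moreover have "(xmon F :: ('v, 'k::field) mpoly) \<in> facet_ideal (poly_ring V) Fs"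
    proof -
      have "xmon ` Fs \<subseteq> carrier (poly_ring V :: ('v, 'k::field) mpoly ring)"
        using finF V by (auto intro: xmon_supp)
      then show ?thesis unfolding facet_ideal_def using ring.genideal_self[OF ring_poly_ring] F by blast
    qed
    ultimately have "(xmon (\<Union>(insert F M)) :: ('v, 'k::field) mpoly) \<in> ideal_prod (poly_ring V) (facet_ideal (poly_ring V) Fs)
                  (ideal_pow (poly_ring V) (facet_ideal (poly_ring V) Fs) (card M))"
      using ideal_prod.prod[where R="poly_ring V" and I="facet_ideal (poly_ring V) Fs"
          and J="ideal_pow (poly_ring V) (facet_ideal (poly_ring V) Fs) (card M)", OF _ IH] by simp
    then show ?case using insert by simp
  qed
qed


locale onevar =
  fixes B P Q C :: "'a::comm_ring_1 set" and t :: 'a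
  assumes B0: "0 \<in> B" and B1: "1 \<in> B" and Badd: "\<And>a b. a \<in> B \<Longrightarrow> b \<in> B \<Longrightarrow> a + b \<in> B"
    and Bneg: "\<And>a. a \<in> B \<Longrightarrow> - a \<in> B" and Bmult: "\<And>a b. a \<in> B \<Longrightarrow> b \<in> B \<Longrightarrow> a * b \<in> B"
    and CB: "C \<subseteq> B" and C0: "0 \<in> C" and Cadd: "\<And>a b. a \<in> C \<Longrightarrow> b \<in> C \<Longrightarrow> a + b \<in> C"
    and Cneg: "\<And>a. a \<in> C \<Longrightarrow> - a \<in> C" and Cmult: "\<And>a b. a \<in> C \<Longrightarrow> b \<in> C \<Longrightarrow> a * b \<in> C"
    and C1: "1 \<in> C"
    and tB: "t \<in> B"
    and PQ: "P \<subseteq> Q" and QB: "Q \<subseteq> B"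
    and P0: "0 \<in> P" and Padd: "\<And>a b. a \<in> P \<Longrightarrow> b \<in> P \<Longrightarrow> a + b \<in> P"
    and Pneg: "\<And>a. a \<in> P \<Longrightarrow> - a \<in> P" and Pmult: "\<And>a x. a \<in> P \<Longrightarrow> x \<in> B \<Longrightarrow> x * a \<in> P"
    and Pprime: "\<And>a b. a \<in> B \<Longrightarrow> b \<in> B \<Longrightarrow> a * b \<in> P \<Longrightarrow> a \<in> P \<or> b \<in> P"
    and Qadd: "\<And>a b. a \<in> Q \<Longrightarrow> b \<in> Q \<Longrightarrow> a + b \<in> Q"
    and Qneg: "\<And>a. a \<in> Q \<Longrightarrow> - a \<in> Q" and Qmult: "\<And>a x. a \<in> Q \<Longrightarrow> x \<in> B \<Longrightarrow> x * a \<in> Q"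
    and nozd: "\<And>x y. x \<noteq> 0 \<Longrightarrow> y \<noteq> 0 \<Longrightarrow> x * y \<noteq> (0::'a)"
begin

definition Cp :: "'a poly set" where "Cp = {f. \<forall>i. coeff f i \<in> C}"

lemma Bdiff: "a \<in> B \<Longrightarrow> b \<in> B \<Longrightarrow> a - b \<in> B"
  using Badd Bneg by (metis diff_conv_add_uminus)
lemma Cdiff: "a \<in> C \<Longrightarrow> b \<in> C \<Longrightarrow> a - b \<in> C"
  using Cadd Cneg by (metis diff_conv_add_uminus)
lemma Pdiff: "a \<in> P \<Longrightarrow> b \<in> P \<Longrightarrow> a - b \<in> P"
  using Padd Pneg by (metis diff_conv_add_uminus)
lemma Qdiff: "a \<in> Q \<Longrightarrow> b \<in> Q \<Longrightarrow> a - b \<in> Q"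
  using Qadd Qneg by (metis diff_conv_add_uminus)
lemma Pmult2: "a \<in> P \<Longrightarrow> x \<in> B \<Longrightarrow> a * x \<in> P"
  using Pmult by (metis mult.commute)
lemma Qmult2: "a \<in> Q \<Longrightarrow> x \<in> B \<Longrightarrow> a * x \<in> Q"
  using Qmult by (metis mult.commute)

lemma Bsum: "(\<And>i. i \<in> I \<Longrightarrow> f i \<in> B) \<Longrightarrow> sum f I \<in> B"
  by (induct I rule: infinite_finite_induct) (auto intro: B0 Badd)
lemma Csum: "(\<And>i. i \<in> I \<Longrightarrow> f i \<in> C) \<Longrightarrow> sum f I \<in> C"
  by (induct I rule: infinite_finite_induct) (auto intro: C0 Cadd)
lemma Psum: "(\<And>i. i \<in> I \<Longrightarrow> f i \<in> P) \<Longrightarrow> sum f I \<in> P"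
  by (induct I rule: infinite_finite_induct) (auto intro: P0 Padd)
lemma Bpow: "a \<in> B \<Longrightarrow> a ^ n \<in> B"
  by (induct n) (auto intro: B1 Bmult)
lemma Cpow: "a \<in> C \<Longrightarrow> a ^ n \<in> C"
  by (induct n) (auto intro: C1 Cmult)
lemma Ppow_not: "a \<in> B \<Longrightarrow> a \<notin> P \<Longrightarrow> a ^ n \<notin> P"
proof (induct n)
  case 0
  show ?case
  proof
    assume "a ^ 0 \<in> P"
    then have "a * 1 \<in> P" using Pmult[of 1 a] 0 by simp
    then show False using 0 by simp
  qed
next
  case (Suc n)
  then show ?case using Pprime[of a "a ^ n"] Bpow by auto
qed

lemma CpI: "(\<And>i. coeff f i \<in> C) \<Longrightarrow> f \<in> Cp" by (simp add: Cp_def)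
lemma CpD: "f \<in> Cp \<Longrightarrow> coeff f i \<in> C" by (simp add: Cp_def)

lemma Cp_add: "f \<in> Cp \<Longrightarrow> g \<in> Cp \<Longrightarrow> f + g \<in> Cp"
  by (auto simp: Cp_def intro: Cadd)
lemma Cp_diff: "f \<in> Cp \<Longrightarrow> g \<in> Cp \<Longrightarrow> f - g \<in> Cp"
  by (auto simp: Cp_def intro: Cdiff)
lemma Cp_smult: "c \<in> C \<Longrightarrow> f \<in> Cp \<Longrightarrow> smult c f \<in> Cp"
  by (auto simp: Cp_def intro: Cmult)
lemma Cp_monom: "c \<in> C \<Longrightarrow> monom c k \<in> Cp"
  by (auto simp: Cp_def coeff_monom C0)
lemma Cp_mult: "f \<in> Cp \<Longrightarrow> g \<in> Cp \<Longrightarrow> f * g \<in> Cp"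
  by (auto simp: Cp_def coeff_mult intro!: Csum Cmult)
lemma Cp_0: "0 \<in> Cp" by (simp add: Cp_def C0)

lemma poly_B: "f \<in> Cp \<Longrightarrow> poly f t \<in> B"
  unfolding poly_altdef using CB tB by (auto intro!: Bsum Bmult Bpow simp: Cp_def)

lemma lc_C: "f \<in> Cp \<Longrightarrow> lead_coeff f \<in> C" by (simp add: CpD)

lemma drop_top:
  assumes "degree g > 0"
  shows "degree (g - monom (lead_coeff g) (degree g)) < degree g"
proof -
  have "\<forall>i>degree g - 1. coeff (g - monom (lead_coeff g) (degree g)) i = 0"
  proof (intro allI impI)
    fix i assume "i > degree g - 1"
    then have "i \<ge> degree g" using assms by simp
    then show "coeff (g - monom (lead_coeff g) (degree g)) i = 0"
      by (cases "i = degree g") (auto simp: coeff_monom coeff_eq_0)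
  qed
  then have "degree (g - monom (lead_coeff g) (degree g)) \<le> degree g - 1" by (rule degree_le)
  then show ?thesis using assms by simp
qed

lemma TRg:
  assumes "g \<in> Cp" "poly g t \<in> P" "\<exists>i. coeff g i \<notin> P"
  shows "\<exists>g'. g' \<in> Cp \<and> poly g' t \<in> P \<and> lead_coeff g' \<notin> P \<and> degree g' \<le> degree g"
  using assms
proof (induction "degree g" arbitrary: g rule: less_induct)
  case less
  show ?case
  proof (cases "lead_coeff g \<in> P")
    case False
    then show ?thesis using less.prems by blast
  next
    case True
    have dpos: "degree g > 0"
    proof (rule ccontr)
      assume "\<not> degree g > 0"
      then have "degree g = 0" by simp
      then have "coeff g i \<in> P" for i using True P0 by (cases "i = 0") (auto simp: coeff_eq_0)
      then show False using less.prems(3) by blast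
    qed
    define g1 where "g1 = g - monom (lead_coeff g) (degree g)"
    have d1: "degree g1 < degree g" unfolding g1_def by (rule drop_top[OF dpos])
    have c1: "g1 \<in> Cp" unfolding g1_def using less.prems(1) by (intro Cp_diff Cp_monom lc_C)
    have p1: "poly g1 t \<in> P"
      unfolding g1_def using less.prems(2) True tB by (auto simp: poly_monom intro!: Pdiff Pmult2 Bpow)
    have e1: "\<exists>i. coeff g1 i \<notin> P"
    proof -
      obtain i where i: "coeff g i \<notin> P" using less.prems(3) by blast
      then have "i \<noteq> degree g" using True by auto
      then have "coeff g1 i = coeff g i" unfolding g1_def by (simp add: coeff_monom)
      then show ?thesis using i by (intro exI[of _ i]) simp
    qed
    obtain g' where "g' \<in> Cp" "poly g' t \<in> P" "lead_coeff g' \<notin> P" "degree g' \<le> degree g1"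
      using less.hyps[OF d1 c1 p1 e1] by blast
    then show ?thesis using d1 by (intro exI[of _ g']) auto
  qed
qed

lemma TRf:
  assumes "f \<in> Cp" "poly f t \<in> Q" "poly f t \<notin> P"
  shows "\<exists>f'. f' \<in> Cp \<and> poly f' t \<in> Q \<and> poly f' t \<notin> P \<and> (degree f' = 0 \<or> lead_coeff f' \<notin> P)
            \<and> degree f' \<le> degree f"
  using assms
proof (induction "degree f" arbitrary: f rule: less_induct)
  case less
  show ?case
  proof (cases "degree f = 0 \<or> lead_coeff f \<notin> P")
    case True
    then show ?thesis using less.prems by blast
  next
    case False
    then have dpos: "degree f > 0" and lcP: "lead_coeff f \<in> P" by auto
    define f1 where "f1 = f - monom (lead_coeff f) (degree f)"
    have d1: "degree f1 < degree f" unfolding f1_def by (rule drop_top[OF dpos])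
    have c1: "f1 \<in> Cp" unfolding f1_def using less.prems(1) by (intro Cp_diff Cp_monom lc_C)
    have m: "lead_coeff f * t ^ degree f \<in> P" using lcP tB by (intro Pmult2 Bpow)
    have eq: "poly f1 t = poly f t - lead_coeff f * t ^ degree f"
      unfolding f1_def by (simp add: poly_monom)
    have q1: "poly f1 t \<in> Q" unfolding eq using less.prems(2) m PQ by (intro Qdiff) auto
    have p1: "poly f1 t \<notin> P"
    proof
      assume "poly f1 t \<in> P"
      then have "poly f1 t + lead_coeff f * t ^ degree f \<in> P" using m by (rule Padd)
      then show False using less.prems(3) unfolding eq by simp
    qed
    obtain f' where "f' \<in> Cp" "poly f' t \<in> Q" "poly f' t \<notin> P" "degree f' = 0 \<or> lead_coeff f' \<notin> P"
      "degree f' \<le> degree f1"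
      using less.hyps[OF d1 c1 q1 p1] by blast
    then show ?thesis using d1 by (intro exI[of _ f']) auto
  qed
qed

lemma PD:
  assumes f: "f \<in> Cp" "degree f \<ge> 1"
  shows "g \<in> Cp \<Longrightarrow> \<exists>e a r. a \<in> Cp \<and> r \<in> Cp \<and> smult (lead_coeff f ^ e) g = a * f + r \<and> degree r < degree f"
proof (induction "degree g" arbitrary: g rule: less_induct)
  case less
  show ?case
  proof (cases "degree g < degree f")
    case True
    then show ?thesis using less.prems Cp_0 by (intro exI[of _ 0] exI[of _ 0] exI[of _ g]) auto
  next
    case False
    define k where "k = degree g - degree f"
    define g1 where "g1 = smult (lead_coeff f) g - monom (lead_coeff g) k * f"
    have c1: "g1 \<in> Cp" unfolding g1_def using less.prems f
      by (intro Cp_diff Cp_smult Cp_mult Cp_monom lc_C)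
    have "\<forall>i>degree g - 1. coeff g1 i = 0"
    proof (intro allI impI)
      fix i assume i: "i > degree g - 1"
      then have ig: "i \<ge> degree g" using False f by simp
      show "coeff g1 i = 0"
      proof (cases "i = degree g")
        case True
        have "coeff (monom (lead_coeff g) k * f) (degree g) = lead_coeff g * lead_coeff f"
          using False by (simp add: coeff_monom_mult k_def)
        then show ?thesis unfolding g1_def using True by (simp add: mult.commute)
      next
        case False
        then have "i > degree g" using ig by simp
        then have "coeff g i = 0" "coeff f (i - k) = 0" using ig \<open>\<not> degree g < degree f\<close>
          by (auto simp: coeff_eq_0 k_def)
        then show ?thesis unfolding g1_def using ig \<open>\<not> degree g < degree f\<close>
          by (simp add: coeff_monom_mult k_def)
      qed
    qed
    then have "degree g1 \<le> degree g - 1" by (rule degree_le)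
    then have d1: "degree g1 < degree g" using False f by simp
    obtain e a r where ear: "a \<in> Cp" "r \<in> Cp" "smult (lead_coeff f ^ e) g1 = a * f + r" "degree r < degree f"
      using less.hyps[OF d1 c1] by blast
    define a' where "a' = a + monom (lead_coeff f ^ e * lead_coeff g) k"
    have "a' \<in> Cp" unfolding a'_def using ear(1) less.prems f
      by (intro Cp_add Cp_monom Cmult Cpow lc_C)
    moreover have "smult (lead_coeff f ^ Suc e) g = a' * f + r"
    proof -
      have "smult (lead_coeff f ^ Suc e) g = smult (lead_coeff f ^ e) (smult (lead_coeff f) g)"
        by (simp add: mult.commute)
      also have "smult (lead_coeff f) g = g1 + monom (lead_coeff g) k * f" unfolding g1_def by simp
      also have "smult (lead_coeff f ^ e) (g1 + monom (lead_coeff g) k * f)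
          = a * f + r + monom (lead_coeff f ^ e * lead_coeff g) k * f"
        using ear(3) by (simp add: smult_add_right smult_monom flip: mult_smult_left)
      also have "\<dots> = a' * f + r" unfolding a'_def by (simp add: algebra_simps)
      finally show ?thesis .
    qed
    ultimately show ?thesis using ear(2,4) by blast
  qed
qed


lemma poly_const_deg0: "degree (f::'a poly) = 0 \<Longrightarrow> poly f x = coeff f 0"
proof -
  assume "degree f = 0"
  then show ?thesis unfolding poly_altdef[of f x] by simp
qed

lemma onevar_main:
  assumes g: "g \<in> Cp" "poly g t \<in> P" "\<exists>i. coeff g i \<notin> P"
    and h: "h \<in> Cp" "poly h t \<in> Q" "poly h t \<notin> P"
  shows "\<exists>c\<in>C. c \<in> Q \<and> c \<notin> P"
proof (rule ccontr)
  assume nc: "\<not> ?thesis"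
  define FS where "FS = {f. f \<in> Cp \<and> poly f t \<in> Q \<and> poly f t \<notin> P}"
  define GS where "GS = {g. g \<in> Cp \<and> poly g t \<in> P \<and> lead_coeff g \<notin> P}"
  have "h \<in> FS" using h FS_def by blast
  then obtain f0 where f0: "f0 \<in> FS" "\<And>f. f \<in> FS \<Longrightarrow> degree f0 \<le> degree f"
    using ex_has_least_nat[of "\<lambda>f. f \<in> FS" h degree] by blast
  obtain f where f: "f \<in> Cp" "poly f t \<in> Q" "poly f t \<notin> P" "degree f = 0 \<or> lead_coeff f \<notin> P"
      "degree f \<le> degree f0"
    using TRf[of f0] f0(1) FS_def by blast
  have fFS: "f \<in> FS" using f FS_def by blast
  have fmin: "\<And>f'. f' \<in> FS \<Longrightarrow> degree f \<le> degree f'" using f0(2) f(5) order_trans by blast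
  have dpos: "degree f > 0"
  proof (rule ccontr)
    assume "\<not> degree f > 0"
    then have "poly f t = coeff f 0" by (simp add: poly_const_deg0)
    then show False using nc f CpD[of f 0] by auto
  qed
  then have lcf: "lead_coeff f \<notin> P" using f(4) by simp
  obtain g00 where "g00 \<in> Cp" "poly g00 t \<in> P" "lead_coeff g00 \<notin> P" "degree g00 \<le> degree g"
    using TRg[OF g] by blast
  then have "g00 \<in> GS" using GS_def by blast
  then obtain g1 where g1: "g1 \<in> GS" "\<And>g'. g' \<in> GS \<Longrightarrow> degree g1 \<le> degree g'"
    using ex_has_least_nat[of "\<lambda>g. g \<in> GS" g00 degree] by blast
  have g1c: "g1 \<in> Cp" "poly g1 t \<in> P" "lead_coeff g1 \<notin> P" using g1(1) GS_def by auto
  have gpos: "degree g1 > 0"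
  proof (rule ccontr)
    assume "\<not> degree g1 > 0"
    then have "poly g1 t = lead_coeff g1" by (simp add: poly_const_deg0)
    then show False using g1c by simp
  qed
  have fB: "poly f t \<in> B" "poly g1 t \<in> B" using f(1) g1c(1) by (auto intro: poly_B)
  have lcB: "lead_coeff f \<in> B" "lead_coeff g1 \<in> B" using f(1) g1c(1) CB lc_C by auto
  show False
  proof (cases "degree g1 \<le> degree f")
    case True
    define k where "k = degree f - degree g1"
    define f1 where "f1 = smult (lead_coeff g1) f - monom (lead_coeff f) k * g1"
    have c1: "f1 \<in> Cp" unfolding f1_def using f(1) g1c(1) by (intro Cp_diff Cp_smult Cp_mult Cp_monom lc_C)
    have "\<forall>i>degree f - 1. coeff f1 i = 0"
    proof (intro allI impI)
      fix i assume i: "i > degree f - 1"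
      then have ig: "i \<ge> degree f" using dpos by simp
      show "coeff f1 i = 0"
      proof (cases "i = degree f")
        case True
        have "coeff (monom (lead_coeff f) k * g1) (degree f) = lead_coeff f * lead_coeff g1"
          using \<open>degree g1 \<le> degree f\<close> by (simp add: coeff_monom_mult k_def)
        then show ?thesis unfolding f1_def using True by (simp add: mult.commute)
      next
        case False
        then have "i > degree f" using ig by simp
        then have "coeff f i = 0" "coeff g1 (i - k) = 0" using ig \<open>degree g1 \<le> degree f\<close>
          by (auto simp: coeff_eq_0 k_def)
        then show ?thesis unfolding f1_def using ig \<open>degree g1 \<le> degree f\<close>
          by (simp add: coeff_monom_mult k_def)
      qed
    qed
    then have "degree f1 \<le> degree f - 1" by (rule degree_le)
    then have d1: "degree f1 < degree f" using dpos by simp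
    have eq: "poly f1 t = lead_coeff g1 * poly f t - lead_coeff f * t ^ k * poly g1 t"
      unfolding f1_def by (simp add: poly_monom)
    have m2: "lead_coeff f * t ^ k * poly g1 t \<in> P" using g1c(2) lcB tB by (intro Pmult Bmult Bpow)
    have q1: "poly f1 t \<in> Q" unfolding eq using Qdiff[OF Qmult[OF f(2) lcB(2)] subsetD[OF PQ m2]] .
    have p1: "poly f1 t \<notin> P"
    proof
      assume "poly f1 t \<in> P"
      then have "poly f1 t + lead_coeff f * t ^ k * poly g1 t \<in> P" using m2 by (rule Padd)
      then have "lead_coeff g1 * poly f t \<in> P" unfolding eq by simp
      then show False using Pprime[OF lcB(2) fB(1)] g1c(3) f(3) by blast
    qed
    have "f1 \<in> FS" using c1 q1 p1 FS_def by blast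
    then show False using fmin d1 by fastforce
  next
    case False
    then have dlt: "degree f < degree g1" by simp
    obtain e a r where ear: "a \<in> Cp" "r \<in> Cp" "smult (lead_coeff f ^ e) g1 = a * f + r" "degree r < degree f"
      using PD[OF f(1) _ g1c(1)] dpos by auto
    have aB: "poly a t \<in> B" "poly r t \<in> B" using ear by (auto intro: poly_B)
    have peq: "lead_coeff f ^ e * poly g1 t = poly a t * poly f t + poly r t"
      using arg_cong[OF ear(3), of "\<lambda>p. poly p t"] by simp
    have lpe: "lead_coeff f ^ e * poly g1 t \<in> P" using g1c(2) lcB by (intro Pmult Bpow)
    have rP: "poly r t \<in> P"
    proof (rule ccontr)
      assume rnP: "poly r t \<notin> P"
      have "poly r t = lead_coeff f ^ e * poly g1 t - poly a t * poly f t" using peq by (simp add: algebra_simps)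
      moreover have "poly a t * poly f t \<in> Q" using f(2) aB by (intro Qmult)
      ultimately have "poly r t \<in> Q" using lpe PQ by (auto intro: Qdiff)
      then have "r \<in> FS" using ear(2) rnP FS_def by blast
      then show False using fmin ear(4) by fastforce
    qed
    have "poly a t * poly f t \<in> P"
    proof -
      have "poly a t * poly f t = lead_coeff f ^ e * poly g1 t - poly r t" using peq by (simp add: algebra_simps)
      then show ?thesis using lpe rP by (simp add: Pdiff)
    qed
    then have aP: "poly a t \<in> P" using Pprime[OF aB(1) fB(1)] f(3) by blast
    have lfe: "lead_coeff f ^ e * lead_coeff g1 \<notin> P"
      using Pprime[OF Bpow[OF lcB(1)] lcB(2)] Ppow_not[OF lcB(1) lcf] g1c(3) by blast
    have cn: "coeff (a * f) (degree g1) = lead_coeff f ^ e * lead_coeff g1"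
    proof -
      have "coeff (smult (lead_coeff f ^ e) g1) (degree g1) = coeff (a * f + r) (degree g1)" using ear(3) by simp
      moreover have "coeff r (degree g1) = 0" using ear(4) dlt by (simp add: coeff_eq_0)
      ultimately show ?thesis by simp
    qed
    have exa: "\<exists>i. coeff a i \<notin> P"
    proof (rule ccontr)
      assume "\<not> ?thesis"
      then have "\<forall>i. coeff a i \<in> P" by blast
      then have "coeff (a * f) (degree g1) \<in> P" unfolding coeff_mult
        using f(1) CB by (auto intro!: Psum Pmult2 dest: CpD)
      then show False using cn lfe by simp
    qed
    have a0: "a \<noteq> 0" using exa P0 by auto
    have f0': "lead_coeff f \<noteq> 0" using lcf P0 by auto
    have "lead_coeff a \<noteq> 0" using a0 by simp
    then have "coeff (a * f) (degree a + degree f) \<noteq> 0"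
      using nozd f0' by (simp add: coeff_mult_degree_sum)
    then have "degree a + degree f \<le> degree (a * f)" by (rule le_degree)
    also have "degree (a * f) \<le> degree g1"
    proof -
      have "a * f = smult (lead_coeff f ^ e) g1 - r" using ear(3) by simp
      then have "degree (a * f) \<le> max (degree (smult (lead_coeff f ^ e) g1)) (degree r)"
        using degree_diff_le_max by metis
      then show ?thesis using ear(4) dlt degree_smult_le[of "lead_coeff f ^ e" g1] by linarith
    qed
    finally have da: "degree a < degree g1" using dpos by simp
    obtain a' where "a' \<in> Cp" "poly a' t \<in> P" "lead_coeff a' \<notin> P" "degree a' \<le> degree a"
      using TRg[OF ear(1) aP exa] by blast
    then have "a' \<in> GS" "degree a' < degree g1" using GS_def da by auto
    then show False using g1(2) by fastforce
  qed
qed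

end


section \<open>Decomposition with respect to one variable\<close>

lemma poly_mapping_monomial_sum: "p = (\<Sum>m\<in>kys p. sng m (lkp p m))"
proof (rule poly_mapping_eqI)
  fix x
  have "lkp (\<Sum>m\<in>kys p. sng m (lkp p m)) x = (\<Sum>m\<in>kys p. (lkp p m when m = x))"
    by (simp add: lookup_sum lookup_single)
  also have "\<dots> = lkp p x"
  proof (cases "x \<in> kys p")
    case True
    then have "(\<Sum>m\<in>kys p. (lkp p m when m = x)) = (\<Sum>m\<in>{x}. (lkp p m when m = x))"
      by (intro sum.mono_neutral_right) (auto simp: when_def)
    then show ?thesis by simp
  next
    case False
    then have "(\<Sum>m\<in>kys p. (lkp p m when m = x)) = 0" by (intro sum.neutral) (auto simp: when_def)
    then show ?thesis using False by (simp add: in_keys_iff)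
  qed
  finally show "lkp p x = lkp (\<Sum>m\<in>kys p. sng m (lkp p m)) x" by simp
qed

lemma var_power: "(var j :: ('v, 'k::field) mpoly) ^ n = sng (sng j n) 1"
  by (induct n) (auto simp: var_def mult_single single_add[symmetric] add.commute)

lemma monomial_split:
  "(sng m c :: ('v, 'k::field) mpoly) = sng (Poly_Mapping.update j 0 m) c * var j ^ (lkp m j)"
proof -
  have "m = Poly_Mapping.update j 0 m + sng j (lkp m j)"
    by (rule poly_mapping_eqI) (simp add: lookup_add lookup_update lookup_single when_def)
  then show ?thesis by (simp add: var_power mult_single flip: \<open>m = _\<close>)
qed

lemma supp_in_single_update:
  assumes "kys m \<subseteq> insert j T"
  shows "supp_in T (sng (Poly_Mapping.update j 0 m) (c::'k::field))"
  using assms by (auto simp: supp_in_def keys_update)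

lemma decompose:
  fixes p :: "('v, 'k::field) mpoly"
  assumes "supp_in (insert j T) p"
  shows "\<exists>h. (\<forall>i. supp_in T (coeff h i)) \<and> poly h (var j) = p"
proof -
  define h where "h = (\<Sum>m\<in>kys p. monom (sng (Poly_Mapping.update j 0 m) (lkp p m)) (lkp m j))"
  have "\<forall>i. supp_in T (coeff h i)"
  proof
    fix i
    have "coeff h i = (\<Sum>m\<in>kys p. coeff (monom (sng (Poly_Mapping.update j 0 m) (lkp p m)) (lkp m j)) i)"
      unfolding h_def by (rule coeff_sum)
    moreover have "supp_in T (\<Sum>m\<in>kys p. coeff (monom (sng (Poly_Mapping.update j 0 m) (lkp p m)) (lkp m j)) i)"
    proof (rule supp_in_sum)
      fix m assume "m \<in> kys p"
      then have "kys m \<subseteq> insert j T" using assms by (auto simp: supp_in_def)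
      then show "supp_in T (coeff (monom (sng (Poly_Mapping.update j 0 m) (lkp p m)) (lkp m j)) i)"
        using supp_in_single_update[of m j T] by (auto simp: coeff_monom)
    qed
    ultimately show "supp_in T (coeff h i)" by simp
  qed
  moreover have "poly h (var j) = p"
  proof -
    have "poly h (var j) = (\<Sum>m\<in>kys p. sng (Poly_Mapping.update j 0 m) (lkp p m) * var j ^ (lkp m j))"
      unfolding h_def by (simp add: poly_sum poly_monom)
    also have "\<dots> = (\<Sum>m\<in>kys p. sng m (lkp p m))" by (simp add: monomial_split[symmetric])
    also have "\<dots> = p" by (rule poly_mapping_monomial_sum[symmetric])
    finally show ?thesis .
  qed
  ultimately show ?thesis by blast
qed

lemma onevar_inst:
  fixes P Q :: "('v, 'k::field) mpoly set"
  assumes P: "primeideal P (poly_ring V)" and Q: "ideal Q (poly_ring V)" and PQ: "P \<subseteq> Q"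
    and T: "T \<subseteq> V" and j: "j \<in> V"
  shows "onevar {p. supp_in V p} P Q {p. supp_in T p} (var j)"
proof -
  have Pi: "ideal P (poly_ring V)" using P primeideal.axioms(1) by blast
  have Padd: "a + b \<in> P" if "a \<in> P" "b \<in> P" for a b
    using additive_subgroup.a_closed[OF ideal.axioms(1)[OF Pi] that] by simp
  have Qadd: "a + b \<in> Q" if "a \<in> Q" "b \<in> Q" for a b
    using additive_subgroup.a_closed[OF ideal.axioms(1)[OF Q] that] by simp
  have Psub: "supp_in V a" if "a \<in> P" for a
    using additive_subgroup.a_subset[OF ideal.axioms(1)[OF Pi]] that by auto
  have Qsub: "supp_in V a" if "a \<in> Q" for a
    using additive_subgroup.a_subset[OF ideal.axioms(1)[OF Q]] that by auto
  have Pneg: "- a \<in> P" if "a \<in> P" for a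
    using additive_subgroup.a_inv_closed[OF ideal.axioms(1)[OF Pi] that] Psub[OF that] by simp
  have Qneg: "- a \<in> Q" if "a \<in> Q" for a
    using additive_subgroup.a_inv_closed[OF ideal.axioms(1)[OF Q] that] Qsub[OF that] by simp
  have Pmult: "x * a \<in> P" if "a \<in> P" "supp_in V x" for a x
    using ideal.I_l_closed[OF Pi that(1)] that(2) by simp
  have Qmult: "x * a \<in> Q" if "a \<in> Q" "supp_in V x" for a x
    using ideal.I_l_closed[OF Q that(1)] that(2) by simp
  have P0: "0 \<in> P" using additive_subgroup.zero_closed[OF ideal.axioms(1)[OF Pi]] by simp
  have Pprime: "a \<in> P \<or> b \<in> P" if "supp_in V a" "supp_in V b" "a * b \<in> P" for a b
    using primeideal.I_prime[OF P, of a b] that by simp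
  have Pprime': "\<And>a b. a \<in> {p. supp_in V p} \<Longrightarrow> b \<in> {p. supp_in V p} \<Longrightarrow> a * b \<in> P \<Longrightarrow> a \<in> P \<or> b \<in> P"
    using Pprime by simp
  have nozd: "\<And>x y. x \<noteq> 0 \<Longrightarrow> y \<noteq> 0 \<Longrightarrow> x * y \<noteq> (0::('v, 'k) mpoly)"
    by (rule mpoly_mult_nonzero)
  show ?thesis
    by (unfold_locales; (fact Pprime' | fact nozd | auto intro: supp_in_add supp_in_uminus supp_in_mult supp_in_mono[OF _ T] var_supp[OF j]
        Padd Pneg Pmult Qadd Qneg Qmult P0 Psub Qsub dest: subsetD[OF PQ]))
qed


section \<open>Tower argument\<close>

lemma tower:
  fixes P Q :: "('v, 'k::field) mpoly set"
  assumes V: "finite V" and P: "primeideal P (poly_ring V)" and Q: "ideal Q (poly_ring V)" and PQ: "P \<subseteq> Q"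
    and S: "S \<subseteq> V"
    and hQ: "\<And>p. supp_in S p \<Longrightarrow> p \<in> Q \<Longrightarrow> p = 0"
    and hmax: "\<And>j. j \<in> V - S \<Longrightarrow> \<exists>g0. supp_in (insert j S) g0 \<and> g0 \<in> P \<and> g0 \<noteq> 0"
  shows "S \<subseteq> T \<Longrightarrow> T \<subseteq> V \<Longrightarrow> supp_in T q \<Longrightarrow> q \<in> Q \<Longrightarrow> q \<notin> P \<Longrightarrow> \<exists>c. supp_in S c \<and> c \<in> Q \<and> c \<notin> P"
proof (induction "card (T - S)" arbitrary: T q rule: less_induct)
  case less
  show ?case
  proof (cases "T = S")
    case True
    then show ?thesis using less.prems by blast
  next
    case False
    then obtain j where j: "j \<in> T" "j \<notin> S" using less.prems(1) by blast
    define T' where "T' = T - {j}"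
    have ST': "S \<subseteq> T'" "T' \<subseteq> V" using less.prems(1,2) j unfolding T'_def by auto
    have jV: "j \<in> V" using j less.prems(2) by blast
    have TT: "T = insert j T'" using j unfolding T'_def by blast
    have fin: "finite T" using less.prems(2) V finite_subset by blast
    have lt: "card (T' - S) < card (T - S)"
      unfolding T'_def using j fin by (metis Diff_insert Diff_insert2 card_Diff1_less finite_Diff DiffI)
    interpret ov: onevar "{p. supp_in V p}" P Q "{p. supp_in T' p}" "var j"
      by (rule onevar_inst[OF P Q PQ ST'(2) jV])
    obtain h where h: "\<forall>i. supp_in T' (coeff h i)" "poly h (var j) = q"
      using decompose[of j T' q] less.prems(3) TT by auto
    obtain g0 where g0: "supp_in (insert j S) g0" "g0 \<in> P" "g0 \<noteq> 0" using hmax[of j] j jV by blast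
    obtain g where g: "\<forall>i. supp_in S (coeff g i)" "poly g (var j) = g0"
      using decompose[OF g0(1)] by blast
    have gex: "\<exists>i. coeff g i \<notin> P"
    proof (rule ccontr)
      assume "\<not> ?thesis"
      then have "\<forall>i. coeff g i \<in> P" by blast
      then have "\<forall>i. coeff g i \<in> Q" using PQ by blast
      then have "\<forall>i. coeff g i = 0" using hQ g(1) by blast
      then have "g = 0" using poly_eqI[of g 0] by simp
      then show False using g(2) g0(3) by simp
    qed
    have gC: "g \<in> ov.Cp" unfolding ov.Cp_def using g(1) ST'(1) supp_in_mono by blast
    have hC: "h \<in> ov.Cp" unfolding ov.Cp_def using h(1) by blast
    obtain c where c: "supp_in T' c" "c \<in> Q" "c \<notin> P"
      using ov.onevar_main[OF gC _ gex hC] g(2) g0(2) h(2) less.prems(4,5) by auto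
    show ?thesis using less.hyps[OF lt ST' c] .
  qed
qed

lemma core_contra:
  fixes P Q :: "('v, 'k::field) mpoly set"
  assumes V: "finite V" and P: "primeideal P (poly_ring V)" and Q: "ideal Q (poly_ring V)" and PQ: "P \<subset> Q"
    and S: "S \<subseteq> V"
    and hQ: "\<And>p. supp_in S p \<Longrightarrow> p \<in> Q \<Longrightarrow> p = 0"
    and hmax: "\<And>j. j \<in> V - S \<Longrightarrow> \<exists>g0. supp_in (insert j S) g0 \<and> g0 \<in> P \<and> g0 \<noteq> 0"
  shows False
proof -
  obtain q where q: "q \<in> Q" "q \<notin> P" using PQ by blast
  have "supp_in V q" using q(1) additive_subgroup.a_subset[OF ideal.axioms(1)[OF Q]] by auto
  then obtain c where c: "supp_in S c" "c \<in> Q" "c \<notin> P"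
    using tower[OF V P Q _ S hQ hmax, of V q] PQ S q by auto
  have "c = 0" using hQ c by blast
  moreover have "(0::('v, 'k) mpoly) \<in> P"
    using additive_subgroup.zero_closed[OF ideal.axioms(1)[OF primeideal.axioms(1)[OF P]]] by simp
  ultimately show False using c by simp
qed

section \<open>The invariant phi\<close>

definition indepP :: "'v set \<Rightarrow> ('v, 'k::field) mpoly set \<Rightarrow> 'v set \<Rightarrow> bool" where
  "indepP V P S \<longleftrightarrow> S \<subseteq> V \<and> (\<forall>p. supp_in S p \<and> p \<in> P \<longrightarrow> p = 0)"

definition phi :: "'v set \<Rightarrow> ('v, 'k::field) mpoly set \<Rightarrow> nat" where
  "phi V P = Max {card S | S. indepP V P S}"

lemma supp_in_empty_const:
  fixes p :: "('v, 'k::field) mpoly"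
  assumes "supp_in {} p"
  shows "p = sng 0 (lkp p 0)"
proof (rule poly_mapping_eqI)
  fix m
  show "lkp p m = lkp (sng 0 (lkp p 0)) m"
  proof (cases "m = 0")
    case False
    then have "m \<notin> kys p" using assms unfolding supp_in_def by (auto simp flip: keys_eq_empty)
    then show ?thesis using False by (simp add: in_keys_iff lookup_single)
  qed simp
qed

lemma indep_empty:
  fixes P :: "('v, 'k::field) mpoly set"
  assumes P: "primeideal P (poly_ring V)"
  shows "indepP V P {}"
  unfolding indepP_def
proof (intro conjI allI impI)
  fix p :: "('v, 'k) mpoly" assume p: "supp_in {} p \<and> p \<in> P"
  show "p = 0"
  proof (rule ccontr)
    assume "p \<noteq> 0"
    define c where "c = lkp p 0"
    have pc: "p = sng 0 c" using supp_in_empty_const p c_def by blast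
    then have c0: "c \<noteq> 0" using \<open>p \<noteq> 0\<close> by auto
    have "sng 0 (inverse c) * p \<in> P"
      using ideal.I_l_closed[OF primeideal.axioms(1)[OF P] conjunct2[OF p], of "sng 0 (inverse c)"]
      by (simp add: supp_in_def)
    moreover have "sng 0 (inverse c) * p = 1" using c0 pc by (simp add: mult_single)
    ultimately have "\<one>\<^bsub>poly_ring V\<^esub> \<in> P" by simp
    then have "P = carrier (poly_ring V)" using ideal.one_imp_carrier[OF primeideal.axioms(1)[OF P]] by blast
    then show False using primeideal.I_notcarr[OF P] by simp
  qed
qed simp

lemma indep_finite_set:
  assumes "finite V"
  shows "finite {card S | S. indepP V P S}"
proof (rule finite_subset[of _ "card ` Pow V"])
  show "{card S | S. indepP V P S} \<subseteq> card ` Pow V" by (auto simp: indepP_def)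
qed (use assms in simp)

lemma phi_ge: "finite V \<Longrightarrow> indepP V P S \<Longrightarrow> card S \<le> phi V P"
  unfolding phi_def by (rule Max_ge[OF indep_finite_set]) auto

lemma phi_attained:
  fixes P :: "('v, 'k::field) mpoly set"
  assumes V: "finite V" and P: "primeideal P (poly_ring V)"
  obtains S where "indepP V P S" "card S = phi V P"
proof -
  have ne: "{card S | S. indepP V P S} \<noteq> {}" using indep_empty[OF P] by blast
  from Max_in[OF indep_finite_set[OF V] ne] obtain S where "indepP V P S" "card S = phi V P"
    unfolding phi_def by auto
  then show ?thesis using that by blast
qed

lemma phi_strict:
  fixes P Q :: "('v, 'k::field) mpoly set"
  assumes V: "finite V" and P: "primeideal P (poly_ring V)" and Q: "primeideal Q (poly_ring V)" and PQ: "P \<subset> Q"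
  shows "phi V Q < phi V P"
proof (rule ccontr)
  assume nlt: "\<not> phi V Q < phi V P"
  obtain S where S: "indepP V Q S" "card S = phi V Q" using phi_attained[OF V Q] by blast
  have SV: "S \<subseteq> V" and hQ: "\<And>p. supp_in S p \<Longrightarrow> p \<in> Q \<Longrightarrow> p = 0" using S(1) unfolding indepP_def by auto
  have finS: "finite S" using SV V finite_subset by blast
  have hmax: "\<exists>g0. supp_in (insert j S) g0 \<and> g0 \<in> P \<and> g0 \<noteq> 0" if j: "j \<in> V - S" for j
  proof (rule ccontr)
    assume "\<not> ?thesis"
    then have "indepP V P (insert j S)" using SV j unfolding indepP_def by blast
    then have "card (insert j S) \<le> phi V P" by (rule phi_ge[OF V])
    then have "Suc (phi V Q) \<le> phi V P" using finS j S(2) by simp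
    then show False using nlt by simp
  qed
  show False
    by (rule core_contra[OF V P primeideal.axioms(1)[OF Q] PQ SV hQ hmax])
qed

lemma chain_bound:
  fixes Pc :: "nat \<Rightarrow> ('v, 'k::field) mpoly set"
  assumes V: "finite V" and pr: "\<forall>i\<le>n. primeideal (Pc i) (poly_ring V)" and ch: "\<forall>i<n. Pc i \<subset> Pc (Suc i)"
  shows "n \<le> phi V (Pc 0)"
proof -
  have "i \<le> n \<Longrightarrow> phi V (Pc i) + i \<le> phi V (Pc 0)" for i
  proof (induction i)
    case 0 then show ?case by simp
  next
    case (Suc i)
    have "phi V (Pc (Suc i)) < phi V (Pc i)"
      using phi_strict[OF V, of "Pc i" "Pc (Suc i)"] pr ch Suc.prems by simp
    then show ?case using Suc by simp
  qed
  from this[of n] show ?thesis by simp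
qed

lemma phi_le_cover:
  fixes P :: "('v, 'k::field) mpoly set"
  assumes V: "finite V" and P: "primeideal P (poly_ring V)"
  shows "phi V P \<le> card (V - {v \<in> V. (var v :: ('v, 'k) mpoly) \<in> P})"
proof -
  obtain S where S: "indepP V P S" "card S = phi V P" using phi_attained[OF V P] by blast
  have "S \<subseteq> V - {v \<in> V. (var v :: ('v, 'k) mpoly) \<in> P}"
  proof
    fix v assume v: "v \<in> S"
    have "supp_in S (var v :: ('v, 'k) mpoly)" using v by (simp add: var_supp)
    moreover have "(var v :: ('v, 'k) mpoly) \<noteq> 0"
    proof
      assume "(var v :: ('v, 'k) mpoly) = 0"
      then have "lkp (var v :: ('v, 'k) mpoly) (sng v 1) = 0" by simp
      then show False by (simp add: var_def)
    qed
    ultimately have "(var v :: ('v, 'k) mpoly) \<notin> P" using S(1) unfolding indepP_def by blast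
    then show "v \<in> V - {v \<in> V. (var v :: ('v, 'k) mpoly) \<in> P}" using v S(1) unfolding indepP_def by blast
  qed
  then have "card S \<le> card (V - {v \<in> V. (var v :: ('v, 'k) mpoly) \<in> P})" using V by (intro card_mono) auto
  then show ?thesis using S(2) by simp
qed


lemma prime_xmon:
  fixes P :: "('v, 'k::field) mpoly set"
  assumes P: "primeideal P (poly_ring V)" and S: "finite S" "S \<subseteq> V" and x: "xmon S \<in> P"
  shows "\<exists>v\<in>S. (var v :: ('v, 'k) mpoly) \<in> P"
  using S x
proof (induction S rule: finite_induct)
  case empty
  then have "\<one>\<^bsub>poly_ring V\<^esub> \<in> P" by (simp add: xmon_def)
  then have "P = carrier (poly_ring V)" using ideal.one_imp_carrier[OF primeideal.axioms(1)[OF P]] by blast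
  then show ?case using primeideal.I_notcarr[OF P] by simp
next
  case (insert a S)
  have "xmon (insert a S) = (var a :: ('v, 'k) mpoly) * xmon S"
    using insert.hyps by (simp add: xmon_def)
  then have "(var a :: ('v, 'k) mpoly) \<in> P \<or> xmon S \<in> P"
    using primeideal.I_prime[OF P, of "var a" "xmon S"] insert.prems insert.hyps
    by (auto intro: var_supp xmon_supp)
  then show ?case using insert by auto
qed

lemma keys_ind: "finite S \<Longrightarrow> kys (ind S) = S"
  by (auto simp: in_keys_iff lookup_ind split: if_splits)

lemma xmon_in_Xid:
  assumes "finite S" "S \<subseteq> V" "S \<inter> T \<noteq> {}"
  shows "(xmon S :: ('v, 'k::field) mpoly) \<in> Xid V T"
  using assms by (auto simp: Xid_def mono_ideal_def keys_xmon keys_ind intro: xmon_supp)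

lemma var_in_Xid_iff:
  assumes "w \<in> V"
  shows "(var w :: ('v, 'k::field) mpoly) \<in> Xid V T \<longleftrightarrow> w \<in> T"
proof -
  have "supp_in V (var w :: ('v, 'k::field) mpoly)" using assms by (rule var_supp)
  then show ?thesis by (auto simp: Xid_def mono_ideal_def var_def)
qed

lemma Xid_mono: "T \<subseteq> T' \<Longrightarrow> (Xid V T :: ('v, 'k::field) mpoly set) \<subseteq> Xid V T'"
  by (auto simp: Xid_def mono_ideal_def)


theorem theorem3p5:
  fixes Fs :: "'v set set" and R :: "('v, 'k::field) mpoly ring" and k :: nat
  assumes "facet_set Fs"
    and "finite (vertices Fs)"
    and "simplicial_forest Fs"
    and "R = poly_ring (vertices Fs)"
    and "cohen_macaulay_quot R (vertices Fs) (facet_ideal R Fs)"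
    and "1 \<le> k" and "k \<le> matching_number Fs"
  shows "krull_dim (R Quot sqfree_pow R (vertices Fs) (facet_ideal R Fs) k)
           = enat (card (vertices Fs) - matching_number Fs + k - 1)"
proof -
  note fs = assms(1) and fo = assms(3) and k1 = assms(6) and kn = assms(7)
  define V where "V = vertices Fs"
  have finV: "finite V" using assms(2) V_def by simp
  have FV: "\<Union>Fs \<subseteq> V" unfolding V_def vertices_def by simp
  have finFs: "finite Fs" and finF: "\<And>F. F \<in> Fs \<Longrightarrow> finite F" and neF: "\<And>F. F \<in> Fs \<Longrightarrow> F \<noteq> {}"
    using fs unfolding facet_set_def by auto
  have FsubV: "\<And>F. F \<in> Fs \<Longrightarrow> F \<subseteq> V" using FV by blast
  define I where "I = (facet_ideal (poly_ring V) Fs :: ('v, 'k) mpoly set)"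
  define gens where "gens = {(xmon S :: ('v, 'k) mpoly) | S. finite S \<and> S \<subseteq> V \<and> (xmon S :: ('v, 'k) mpoly) \<in> ideal_pow (poly_ring V) I k}"
  define J where "J = sqfree_pow (poly_ring V) V I k"
  have Jg: "J = genideal (poly_ring V) gens" unfolding J_def sqfree_pow_def gens_def by simp
  define nu where "nu = matching_number Fs"
  define n where "n = card V"
  have gc: "gens \<subseteq> carrier (poly_ring V)" unfolding gens_def by (auto intro: xmon_supp)
  have Jideal: "ideal J (poly_ring V)" unfolding Jg by (rule ring.genideal_ideal[OF ring_poly_ring gc])
  obtain M0 where M0: "M0 \<subseteq> Fs" "pairwise disjnt M0" "card M0 = nu"
    using matching_number_obtain[OF finFs] nu_def by blast
  have genJ: "gens \<subseteq> J" unfolding Jg by (rule ring.genideal_self[OF ring_poly_ring gc])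
  have up: "n' \<le> n - nu + k - 1"
    if ch: "\<forall>i\<le>n'. primeideal (Pc i) (poly_ring V) \<and> J \<subseteq> Pc i" "\<forall>i<n'. Pc i \<subset> Pc (Suc i)"
    for Pc n'
  proof -
    have pr: "\<forall>i\<le>n'. primeideal (Pc i) (poly_ring V)" using ch(1) by simp
    have P0: "primeideal (Pc 0) (poly_ring V)" "J \<subseteq> Pc 0" using ch(1) by auto
    define C0 where "C0 = {v \<in> V. (var v :: ('v, 'k) mpoly) \<in> Pc 0}"
    have "n' \<le> phi V (Pc 0)" by (rule chain_bound[OF finV pr ch(2)])
    also have "\<dots> \<le> card (V - C0)" unfolding C0_def by (rule phi_le_cover[OF finV P0(1)])
    finally have n'le: "n' \<le> card (V - C0)" .
    define Min where "Min = {F \<in> M0. F \<subseteq> V - C0}"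
    define Mout where "Mout = M0 - Min"
    have finM0: "finite M0" using M0(1) finFs finite_subset by blast
    have Min_le: "card Min \<le> k - 1"
    proof (rule ccontr)
      assume "\<not> card Min \<le> k - 1"
      then have "k \<le> card Min" by simp
      then obtain M' where M': "M' \<subseteq> Min" "card M' = k" by (rule obtain_subset_with_card_n)
      have M'Fs: "M' \<subseteq> Fs" "pairwise disjnt M'" using M' M0 unfolding Min_def
        by (auto intro: pairwise_subset)
      have xin: "(xmon (\<Union>M') :: ('v, 'k) mpoly) \<in> ideal_pow (poly_ring V) I k"
        using matching_gen[OF fs FV M'Fs] M'(2) unfolding I_def by simp
      have finU: "finite (\<Union>M')"
      proof (rule finite_Union)
        show "finite M'" using M'Fs(1) finFs by (rule finite_subset)
        show "\<And>F. F \<in> M' \<Longrightarrow> finite F" using M'Fs(1) finF by blast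
      qed
      have UV: "\<Union>M' \<subseteq> V - C0" using M' unfolding Min_def by blast
      have "(xmon (\<Union>M') :: ('v, 'k) mpoly) \<in> gens" unfolding gens_def using xin finU UV by blast
      then have "(xmon (\<Union>M') :: ('v, 'k) mpoly) \<in> Pc 0" using genJ P0(2) by blast
      then obtain v where "v \<in> \<Union>M'" "(var v :: ('v, 'k) mpoly) \<in> Pc 0"
        using prime_xmon[OF P0(1) finU] UV by blast
      then show False using UV unfolding C0_def by blast
    qed
    have Mout_le: "card Mout \<le> card C0"
    proof (rule matching_le_cover)
      show "finite C0" using finV unfolding C0_def by simp
      show "pairwise disjnt Mout" using M0(2) unfolding Mout_def by (auto intro: pairwise_subset)
      fix F assume "F \<in> Mout"
      then have "F \<in> Fs" "\<not> F \<subseteq> V - C0" using M0(1) unfolding Mout_def Min_def by auto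
      then show "F \<inter> C0 \<noteq> {}" using FsubV by blast
    qed
    have "nu = card Min + card Mout"
      unfolding Mout_def M0(3)[symmetric] using finM0 by (simp add: card_Diff_subset Min_def card_mono)
    then have "nu \<le> k - 1 + card C0" using Min_le Mout_le by simp
    moreover have "card (V - C0) = n - card C0" unfolding n_def C0_def using finV by (simp add: card_Diff_subset)
    moreover have "card C0 \<le> n" unfolding n_def C0_def using finV by (simp add: card_mono)
    ultimately show ?thesis using n'le k1 by linarith
  qed
  have low: "\<exists>Pc. (\<forall>i\<le>n - nu + k - 1. primeideal (Pc i) (poly_ring V) \<and> J \<subseteq> Pc i)
      \<and> (\<forall>i<n - nu + k - 1. Pc i \<subset> Pc (Suc i))"
  proof -
    obtain C M where CM: "M \<subseteq> Fs" "pairwise disjnt M" "\<forall>F\<in>Fs. F \<inter> C \<noteq> {}" "finite C" "card C \<le> card M"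
      using koenig[OF fs fo] by blast
    define C1 where "C1 = C \<inter> V"
    have C1cov: "\<And>F. F \<in> Fs \<Longrightarrow> F \<inter> C1 \<noteq> {}" using CM(3) FsubV unfolding C1_def by blast
    have finC1: "finite C1" using CM(4) unfolding C1_def by simp
    have "card C1 \<le> card C" using CM(4) unfolding C1_def by (simp add: card_mono)
    also have "\<dots> \<le> card M" by (rule CM(5))
    also have "\<dots> \<le> nu" unfolding nu_def by (rule matching_number_ge[OF finFs CM(1,2)])
    finally have C1le: "card C1 \<le> nu" .
    have C1ge: "nu \<le> card C1" unfolding M0(3)[symmetric]
      by (rule matching_le_cover[OF finC1 M0(2)]) (use C1cov M0(1) in blast)
    have C1V: "C1 \<subseteq> V" unfolding C1_def by blast
    have cardC1: "card C1 = nu" using C1le C1ge by simp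
    have nun: "nu \<le> n" unfolding n_def using card_mono[OF finV C1V] cardC1 by simp
    have "k - 1 \<le> card C1" using cardC1 kn nu_def by simp
    then obtain D where D: "D \<subseteq> C1" "card D = k - 1" by (rule obtain_subset_with_card_n)
    define W where "W = (V - C1) \<union> D"
    define T0 where "T0 = C1 - D"
    have WT0: "W \<inter> T0 = {}" "T0 \<subseteq> V" "V - W = T0" unfolding W_def T0_def using C1V D(1) by auto
    have finW: "finite W" unfolding W_def using finV finC1 D(1) finite_subset by auto
    have cardW: "card W = n - nu + k - 1"
    proof -
      have "card W = card (V - C1) + card D"
        unfolding W_def using finV finC1 D(1) finite_subset by (intro card_Un_disjoint) auto
      also have "card (V - C1) = n - nu" unfolding n_def using card_Diff_subset[OF finC1 C1V] cardC1 by simp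
      finally show ?thesis using D(2) k1 nun by simp
    qed
    obtain ws where ws: "set ws = W" "distinct ws" using finite_distinct_list[OF finW] by blast
    have lws: "length ws = n - nu + k - 1" using distinct_card[OF ws(2)] ws(1) cardW by simp
    define Pc where "Pc i = (Xid V (T0 \<union> set (take i ws)) :: ('v, 'k) mpoly set)" for i
    have TV: "T0 \<union> set (take i ws) \<subseteq> V" for i
      using WT0(2) ws(1) set_take_subset[of i ws] D(1) C1V unfolding W_def by auto
    have genT0: "gens \<subseteq> Xid V T0"
    proof
      fix x assume "x \<in> gens"
      then obtain S where S: "x = xmon S" "finite S" "S \<subseteq> V" "(xmon S :: ('v, 'k) mpoly) \<in> ideal_pow (poly_ring V) I k"
        unfolding gens_def by blast
      obtain M' where M': "M' \<subseteq> Fs" "card M' = k" "pairwise disjnt M'" "\<Union>M' \<subseteq> S"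
        using gen_has_matching[OF fs FV S(2)] S(4) unfolding I_def by blast
      have "S \<inter> T0 \<noteq> {}"
      proof
        assume ST: "S \<inter> T0 = {}"
        then have SW: "S \<subseteq> W" using S(3) WT0(3) by blast
        have "card M' \<le> card D"
        proof (rule matching_le_cover[OF _ M'(3)])
          show "finite D" using finC1 D(1) finite_subset by blast
          fix F assume F: "F \<in> M'"
          then have "F \<inter> C1 \<noteq> {}" using C1cov M'(1) by blast
          moreover have "F \<subseteq> W" using F M'(4) SW by blast
          ultimately show "F \<inter> D \<noteq> {}" unfolding W_def by blast
        qed
        then show False using M'(2) D(2) k1 by simp
      qed
      then show "x \<in> Xid V T0" using S xmon_in_Xid by blast
    qed
    have JP: "J \<subseteq> Pc i" for i
    proof -
      have "J \<subseteq> Xid V T0" unfolding Jg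
        by (rule ring.genideal_minimal[OF ring_poly_ring Xid_ideal genT0])
      also have "\<dots> \<subseteq> Pc i" unfolding Pc_def by (rule Xid_mono) blast
      finally show ?thesis .
    qed
    have prime: "primeideal (Pc i) (poly_ring V)" for i unfolding Pc_def by (rule Xid_prime[OF TV])
    have strict: "Pc i \<subset> Pc (Suc i)" if i: "i < n - nu + k - 1" for i
    proof -
      have il: "i < length ws" using i lws by simp
      have tk: "set (take (Suc i) ws) = insert (ws ! i) (set (take i ws))" using il
        by (simp add: take_Suc_conv_app_nth)
      have wW: "ws ! i \<in> W" using nth_mem[OF il] ws(1) by simp
      have wV: "ws ! i \<in> V" using wW unfolding W_def using C1V D(1) by auto
      have wnot: "ws ! i \<notin> T0 \<union> set (take i ws)"
      proof -
        have "ws ! i \<notin> T0" using wW WT0(1) by blast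
        moreover have "ws ! i \<notin> set (take i ws)"
        proof -
          have "distinct (take i ws @ drop i ws)" using ws(2) by simp
          then have "set (take i ws) \<inter> set (drop i ws) = {}" unfolding distinct_append by (elim conjE)
          moreover have "ws ! i \<in> set (drop i ws)" unfolding Cons_nth_drop_Suc[OF il, symmetric] by simp
          ultimately show ?thesis by blast
        qed
        ultimately show ?thesis by blast
      qed
      have "Pc i \<subseteq> Pc (Suc i)" unfolding Pc_def by (rule Xid_mono) (simp add: tk subset_insertI Un_mono)
      moreover have "(var (ws ! i) :: ('v, 'k) mpoly) \<in> Pc (Suc i)"
        unfolding Pc_def var_in_Xid_iff[OF wV] tk by simp
      moreover have "(var (ws ! i) :: ('v, 'k) mpoly) \<notin> Pc i"
        unfolding Pc_def var_in_Xid_iff[OF wV] using wnot by simp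
      ultimately show ?thesis by (auto simp del: var_in_Xid_iff)
    qed
    show ?thesis using prime JP strict by (intro exI[of _ Pc]) auto
  qed
  have "krull_dim (poly_ring V Quot J) = enat (n - nu + k - 1)"
    by (rule krull_dim_quot_eq[OF cring_poly_ring Jideal up low])
  then show ?thesis using assms(4) unfolding J_def I_def V_def n_def nu_def by simp
qed


end
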